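(* Let $w\in\mathcal S_n$ and $a,b\in\mathrm R(w)$. Then $d([a],[b])=1$ if and only if $t(a,b)=1$, i.e. if and only if there is exactly one triple $(x,y,z)\in\mathrm T_w$ with $\Gamma(a,(x,y,z))\neq\Gamma(b,(x,y,z))$.
   Context: Permutations are in one-line notation. A word $a=a_1\cdots a_\ell$ with letters in $\{1,\dots,n-1\}$ acts on a word of length $n$ by successively swapping the entries in positions $a_j$ and $a_j+1$. $\mathrm R(w)$ is the set of reduced words of $w$ (words of length $\ell(w)$, the number of inversions of $w$, whose action on $12\cdots n$ yields $w$). For $a\in\mathrm R(w)$ and an inversion $(p,q)$ of $w$ ($p>q$, $p$ left of $q$ in $w$), $P_a(p,q)$ is the index of the unique step of $a$ at which $p$ and $q$ are swapped. Commutation: replacing a factor $ij$, $|i-j|\ge2$, by $ji$; long braid relation: replacing a factor $i(i+1)i$ by $(i+1)i(i+1)$ or vice versa. $[a]$ is the commutation class of $a$ (reduced words reachable by commutations). $C(w)$ is the graph whose vertices are commutation classes, with $[a]\ne[b]$ adjacent when some $a'\in[a]$, $b'\in[b]$ differ by one long braid relation; $d$ is its graph distance. $\mathrm T_w$ is the set of triples $(x,y,z)$, $x<y<z$, with $z,y,x$ appearing in this order in $w$. $\Gamma(a,(x,y,z))=1$ if $P_a(y,x)>P_a(z,y)$ and $0$ otherwise. $t(a,b)=\sum_{(x,y,z)\in\mathrm T_w}\big(\Gamma(a,(x,y,z))+\Gamma(b,(x,y,z))\bmod 2\big)$. *)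

theory Defs
  imports Main "HOL-Library.Extended_Nat"
begin

(* Permutations of {1..n} in one-line notation, as lists *)
definition is_perm :: "nat \<Rightarrow> nat list \<Rightarrow> bool" where
  "is_perm n w \<longleftrightarrow> distinct w \<and> set w = {1..n}"

definition id_perm :: "nat \<Rightarrow> nat list" where
  "id_perm n = [1..<n+1]"

(* swap the entries in (1-based) positions i and i+1 *)
definition swap_pos :: "nat \<Rightarrow> nat list \<Rightarrow> nat list" where
  "swap_pos i xs = xs[i - 1 := xs ! i, i := xs ! (i - 1)]"

(* action of a word: successive swaps, letters applied from left to right *)
definition act :: "nat list \<Rightarrow> nat list \<Rightarrow> nat list" where
  "act a xs = fold swap_pos a xs"

definition inv_count :: "nat list \<Rightarrow> nat" where
  "inv_count w = card {(i, j). i < j \<and> j < length w \<and> w ! i > w ! j}"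

definition reduced_words :: "nat \<Rightarrow> nat list \<Rightarrow> nat list set" where
  "reduced_words n w = {a. set a \<subseteq> {1..n - 1} \<and> length a = inv_count w
      \<and> act a (id_perm n) = w}"

definition state :: "nat \<Rightarrow> nat list \<Rightarrow> nat \<Rightarrow> nat list" where
  "state n a k = act (take k a) (id_perm n)"

(* P_a(p,q): the (1-based) index of the unique step of a at which p and q are swapped *)
definition P_idx :: "nat \<Rightarrow> nat list \<Rightarrow> nat \<Rightarrow> nat \<Rightarrow> nat" where
  "P_idx n a p q = (THE j. 1 \<le> j \<and> j \<le> length a \<and>
      {state n a (j - 1) ! (a ! (j - 1) - 1), state n a (j - 1) ! (a ! (j - 1))} = {p, q})"

definition comm_step :: "nat list \<Rightarrow> nat list \<Rightarrow> bool" where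
  "comm_step a b \<longleftrightarrow> (\<exists>u v i j. (i \<ge> j + 2 \<or> j \<ge> i + 2) \<and>
      a = u @ [i, j] @ v \<and> b = u @ [j, i] @ v)"

definition braid_step :: "nat list \<Rightarrow> nat list \<Rightarrow> bool" where
  "braid_step a b \<longleftrightarrow> (\<exists>u v i.
      (a = u @ [i, i+1, i] @ v \<and> b = u @ [i+1, i, i+1] @ v) \<or>
      (a = u @ [i+1, i, i+1] @ v \<and> b = u @ [i, i+1, i] @ v))"

definition comm_class :: "nat list \<Rightarrow> nat list set" where
  "comm_class a = {b. comm_step\<^sup>*\<^sup>* a b}"

definition C_vertices :: "nat \<Rightarrow> nat list \<Rightarrow> nat list set set" where
  "C_vertices n w = comm_class ` reduced_words n w"

definition C_adj :: "nat \<Rightarrow> nat list \<Rightarrow> nat list set \<Rightarrow> nat list set \<Rightarrow> bool" where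
  "C_adj n w A B \<longleftrightarrow> A \<in> C_vertices n w \<and> B \<in> C_vertices n w \<and> A \<noteq> B \<and>
      (\<exists>a' \<in> A. \<exists>b' \<in> B. braid_step a' b')"

definition C_walk :: "nat \<Rightarrow> nat list \<Rightarrow> nat list set \<Rightarrow> nat list set \<Rightarrow> nat \<Rightarrow> bool" where
  "C_walk n w A B k \<longleftrightarrow> (\<exists>ps. length ps = k + 1 \<and> ps ! 0 = A \<and> ps ! k = B \<and>
      set ps \<subseteq> C_vertices n w \<and> (\<forall>i < k. C_adj n w (ps ! i) (ps ! (i + 1))))"

(* graph distance d in C(w) (infinity if not connected) *)
definition C_dist :: "nat \<Rightarrow> nat list \<Rightarrow> nat list set \<Rightarrow> nat list set \<Rightarrow> enat" where
  "C_dist n w A B = (INF k \<in> {k. C_walk n w A B k}. enat k)"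

definition pos :: "nat list \<Rightarrow> nat \<Rightarrow> nat" where
  "pos w v = (THE i. i < length w \<and> w ! i = v)"

definition T_set :: "nat list \<Rightarrow> (nat \<times> nat \<times> nat) set" where
  "T_set w = {(x, y, z). x < y \<and> y < z \<and> x \<in> set w \<and> y \<in> set w \<and> z \<in> set w \<and>
      pos w z < pos w y \<and> pos w y < pos w x}"

definition Gamma :: "nat \<Rightarrow> nat list \<Rightarrow> nat \<times> nat \<times> nat \<Rightarrow> nat" where
  "Gamma n a xyz = (case xyz of (x, y, z) \<Rightarrow>
      (if P_idx n a y x > P_idx n a z y then 1 else 0))"

definition t_count :: "nat \<Rightarrow> nat list \<Rightarrow> nat list \<Rightarrow> nat list \<Rightarrow> nat" where
  "t_count n w a b = (\<Sum>xyz \<in> T_set w. (Gamma n a xyz + Gamma n b xyz) mod 2)"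

end

theory Submission
  imports Defs
begin


lemma swap_len[simp]: "length (swap_pos c t) = length t"
  by (simp add: swap_pos_def)

lemma swap_nth:
  assumes "1 \<le> c" "c < length t" "j < length t"
  shows "swap_pos c t ! j = (if j = c - 1 then t ! c else if j = c then t ! (c - 1) else t ! j)"
  using assms by (auto simp: swap_pos_def nth_list_update)

lemma swap_set_distinct:
  assumes "1 \<le> c" "c < length t"
  shows "set (swap_pos c t) = set t" "distinct (swap_pos c t) = distinct t"
proof -
  have e: "swap_pos c t = t[c - 1 := t ! c, c := t ! (c - 1)]" by (simp add: swap_pos_def)
  show "set (swap_pos c t) = set t" unfolding e using assms by (simp add: set_swap)
  show "distinct (swap_pos c t) = distinct t" unfolding e using assms by (simp add: distinct_swap)
qed

lemma swap_comm:
  assumes "1 \<le> c1" "c1 < length t" "1 \<le> c2" "c2 < length t" "c1 \<ge> c2 + 2 \<or> c2 \<ge> c1 + 2"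
  shows "swap_pos c1 (swap_pos c2 t) = swap_pos c2 (swap_pos c1 t)"
  by (rule nth_equalityI) (use assms in \<open>auto simp: swap_nth\<close>)

lemma pos_nth:
  assumes "distinct t" "i < length t"
  shows "pos t (t ! i) = i"
  unfolding pos_def
  by (rule the_equality) (use assms nth_eq_iff_index_eq in auto)

lemma pos_in:
  assumes "distinct t" "v \<in> set t"
  shows "pos t v < length t" "t ! pos t v = v"
proof -
  obtain i where "i < length t" "t ! i = v" using assms by (auto simp: in_set_conv_nth)
  thus "pos t v < length t" "t ! pos t v = v" using pos_nth[OF assms(1)] by auto
qed

lemma pos_swap:
  assumes "distinct t" "1 \<le> c" "c < length t" "r \<in> set t"
  shows "pos (swap_pos c t) r = (if r = t ! (c - 1) then c else if r = t ! c then c - 1 else pos t r)"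
proof -
  have d: "distinct (swap_pos c t)" using swap_set_distinct assms by simp
  obtain i where i: "i < length t" "t ! i = r" using assms by (auto simp: in_set_conv_nth)
  have ne: "t ! (c - 1) \<noteq> t ! c" using assms nth_eq_iff_index_eq by fastforce
  show ?thesis
  proof (cases "r = t ! (c - 1)")
    case True
    hence "swap_pos c t ! c = r" using assms by (simp add: swap_nth)
    thus ?thesis using pos_nth[OF d, of c] assms True by simp
  next
    case F1: False
    show ?thesis
    proof (cases "r = t ! c")
      case True
      hence "swap_pos c t ! (c - 1) = r" using assms by (simp add: swap_nth)
      thus ?thesis using pos_nth[OF d, of "c - 1"] assms True F1 by simp
    next
      case False
      hence "i \<noteq> c" "i \<noteq> c - 1" using i F1 by auto
      hence "swap_pos c t ! i = r" using assms i by (simp add: swap_nth)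
      moreover have "pos t r = i" using pos_nth[OF assms(1) i(1)] i by simp
      ultimately show ?thesis using pos_nth[OF d, of i] i F1 False by simp
    qed
  qed
qed

fun Es :: "nat list \<Rightarrow> nat list \<Rightarrow> (nat \<times> nat) list" where
  "Es s [] = []"
| "Es s (c # a) = (s ! c, s ! (c - 1)) # Es (swap_pos c s) a"

fun good :: "nat list \<Rightarrow> nat list \<Rightarrow> bool" where
  "good s [] = True"
| "good s (c # a) = (1 \<le> c \<and> c < length s \<and> s ! (c - 1) < s ! c \<and> good (swap_pos c s) a)"

lemma Es_length[simp]: "length (Es s a) = length a"
  by (induction a arbitrary: s) auto

lemma Es_append: "Es s (a1 @ a2) = Es s a1 @ Es (fold swap_pos a1 s) a2"
  by (induction a1 arbitrary: s) auto

lemma good_append: "good s (a1 @ a2) \<longleftrightarrow> good s a1 \<and> good (fold swap_pos a1 s) a2"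
  by (induction a1 arbitrary: s) auto

lemma good_fold:
  assumes "good s a"
  shows "length (fold swap_pos a s) = length s \<and> set (fold swap_pos a s) = set s
     \<and> distinct (fold swap_pos a s) = distinct s"
  using assms by (induction a arbitrary: s) (auto simp: swap_set_distinct)

definition invs :: "nat list \<Rightarrow> (nat \<times> nat) set" where
  "invs t = {(p, q). p \<in> set t \<and> q \<in> set t \<and> q < p \<and> pos t p < pos t q}"

lemma finite_invs: "finite (invs t)"
proof -
  have "invs t \<subseteq> set t \<times> set t" by (auto simp: invs_def)
  thus ?thesis by (rule finite_subset) auto
qed

lemma pos_other:
  assumes "distinct t" "1 \<le> c" "c < length t" "r \<in> set t" "r \<noteq> t ! (c - 1)" "r \<noteq> t ! c"
  shows "pos t r < c - 1 \<or> c < pos t r"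
proof -
  have "t ! pos t r = r" using pos_in[OF assms(1,4)] by blast
  hence "pos t r \<noteq> c - 1" "pos t r \<noteq> c" using assms by auto
  thus ?thesis by linarith
qed

lemma invs_swap:
  assumes "distinct t" "1 \<le> c" "c < length t"
  shows "t ! (c - 1) < t ! c \<Longrightarrow> invs (swap_pos c t) = insert (t ! c, t ! (c - 1)) (invs t)
           \<and> (t ! c, t ! (c - 1)) \<notin> invs t"
    and "t ! (c - 1) > t ! c \<Longrightarrow> invs (swap_pos c t) = invs t - {(t ! (c - 1), t ! c)}
           \<and> (t ! (c - 1), t ! c) \<in> invs t"
proof -
  define u where "u = t ! (c - 1)"
  define v where "v = t ! c"
  have st: "set (swap_pos c t) = set t" using swap_set_distinct assms by simp
  have p1: "pos t u = c - 1" "pos t v = c" using pos_nth assms unfolding u_def v_def by auto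
  have in1: "u \<in> set t" "v \<in> set t" using assms unfolding u_def v_def by auto
  have uv: "u \<noteq> v" using assms nth_eq_iff_index_eq unfolding u_def v_def by fastforce
  have ne: "\<And>r. r \<in> set t \<Longrightarrow> r \<noteq> u \<Longrightarrow> r \<noteq> v \<Longrightarrow> pos t r < c - 1 \<or> c < pos t r"
    using pos_other assms unfolding u_def v_def by blast
  have ps: "\<And>r. r \<in> set t \<Longrightarrow> pos (swap_pos c t) r = (if r = u then c else if r = v then c - 1 else pos t r)"
    using pos_swap assms unfolding u_def v_def by blast
  have key: "\<And>p q. p \<in> set t \<Longrightarrow> q \<in> set t \<Longrightarrow> p \<noteq> q \<Longrightarrow>
      (pos (swap_pos c t) p < pos (swap_pos c t) q) =
      (if p = v \<and> q = u then True else if p = u \<and> q = v then False else pos t p < pos t q)"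
  proof -
    fix p q assume pq: "p \<in> set t" "q \<in> set t" "p \<noteq> q"
    show "?thesis p q"
    proof (cases "p = u \<or> p = v")
      case True
      then show ?thesis
      proof
        assume "p = u"
        thus ?thesis using ne[of q] pq ps p1 uv assms(2) by (cases "q = v") auto
      next
        assume "p = v"
        thus ?thesis using ne[of q] pq ps p1 uv assms(2) by (cases "q = u") auto
      qed
    next
      case False
      thus ?thesis using ne[of q] ne[of p] pq ps p1 uv assms(2) by (cases "q = u \<or> q = v") auto
    qed
  qed
  show "t ! (c - 1) < t ! c \<Longrightarrow> invs (swap_pos c t) = insert (t ! c, t ! (c - 1)) (invs t)
           \<and> (t ! c, t ! (c - 1)) \<notin> invs t"
    unfolding u_def[symmetric] v_def[symmetric] invs_def
  proof -
    assume "u < v"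
    show "{(p, q). p \<in> set (swap_pos c t) \<and> q \<in> set (swap_pos c t) \<and> q < p \<and> pos (swap_pos c t) p < pos (swap_pos c t) q} =
    insert (v, u) {(p, q). p \<in> set t \<and> q \<in> set t \<and> q < p \<and> pos t p < pos t q} \<and>
    (v, u) \<notin> {(p, q). p \<in> set t \<and> q \<in> set t \<and> q < p \<and> pos t p < pos t q}"
      using key st in1 \<open>u < v\<close> p1 by (auto simp: set_eq_iff)
  qed
  show "t ! (c - 1) > t ! c \<Longrightarrow> invs (swap_pos c t) = invs t - {(t ! (c - 1), t ! c)}
           \<and> (t ! (c - 1), t ! c) \<in> invs t"
    unfolding u_def[symmetric] v_def[symmetric] invs_def
  proof -
    assume "u > v"
    show "{(p, q). p \<in> set (swap_pos c t) \<and> q \<in> set (swap_pos c t) \<and> q < p \<and> pos (swap_pos c t) p < pos (swap_pos c t) q} =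
    {(p, q). p \<in> set t \<and> q \<in> set t \<and> q < p \<and> pos t p < pos t q} - {(u, v)} \<and>
    (u, v) \<in> {(p, q). p \<in> set t \<and> q \<in> set t \<and> q < p \<and> pos t p < pos t q}"
      using key st in1 \<open>u > v\<close> p1 assms(2) by (auto simp: set_eq_iff split: if_splits)
  qed
qed


lemma Es_invs:
  assumes "good s a" "distinct s"
  shows "invs (fold swap_pos a s) = invs s \<union> set (Es s a) \<and> invs s \<inter> set (Es s a) = {}
         \<and> distinct (Es s a)"
  using assms
proof (induction a arbitrary: s)
  case Nil
  then show ?case by simp
next
  case (Cons c a)
  let ?s' = "swap_pos c s"
  have g: "1 \<le> c" "c < length s" "s ! (c - 1) < s ! c" "good ?s' a" using Cons.prems by auto
  have d': "distinct ?s'" using swap_set_distinct g Cons.prems by simp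
  have IH: "invs (fold swap_pos a ?s') = invs ?s' \<union> set (Es ?s' a) \<and> invs ?s' \<inter> set (Es ?s' a) = {}
         \<and> distinct (Es ?s' a)" using Cons.IH[OF g(4) d'] .
  have sw: "invs ?s' = insert (s ! c, s ! (c - 1)) (invs s) \<and> (s ! c, s ! (c - 1)) \<notin> invs s"
    using invs_swap(1)[OF Cons.prems(2) g(1,2,3)] .
  show ?case using IH sw by auto
qed

definition vl :: "nat list \<Rightarrow> nat list \<Rightarrow> bool" where
  "vl s a \<longleftrightarrow> (\<forall>c \<in> set a. 1 \<le> c \<and> c < length s)"

lemma fold_vl:
  assumes "vl s a"
  shows "length (fold swap_pos a s) = length s \<and> set (fold swap_pos a s) = set s
     \<and> distinct (fold swap_pos a s) = distinct s"
  using assms by (induction a arbitrary: s) (auto simp: swap_set_distinct vl_def)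

lemma count_bound:
  assumes "distinct s" "vl s a"
  shows "card (invs (fold swap_pos a s)) \<le> card (invs s) + length a \<and>
    (\<not> good s a \<longrightarrow> card (invs (fold swap_pos a s)) < card (invs s) + length a)"
  using assms
proof (induction a arbitrary: s)
  case Nil
  then show ?case by simp
next
  case (Cons c a)
  let ?s' = "swap_pos c s"
  have g: "1 \<le> c" "c < length s" using Cons.prems by (auto simp: vl_def)
  have d': "distinct ?s'" using swap_set_distinct g Cons.prems by simp
  have vl': "vl ?s' a" using Cons.prems by (auto simp: vl_def)
  note IH = Cons.IH[OF d' vl']
  have ne: "s ! (c - 1) \<noteq> s ! c" using Cons.prems(1) g nth_eq_iff_index_eq by fastforce
  show ?case
  proof (cases "s ! (c - 1) < s ! c")
    case True
    have "card (invs ?s') = card (invs s) + 1"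
      using invs_swap(1)[OF Cons.prems(1) g True] finite_invs by simp
    then show ?thesis using IH True g by auto
  next
    case False
    hence lt: "s ! (c - 1) > s ! c" using ne by simp
    have "card (invs ?s') + 1 = card (invs s)"
      using invs_swap(2)[OF Cons.prems(1) g lt] finite_invs
      by (metis card_Diff1_less card_Suc_Diff1 Suc_eq_plus1)
    then show ?thesis using IH lt by auto
  qed
qed

lemma inv_count_invs:
  assumes "distinct t"
  shows "inv_count t = card (invs t)"
proof -
  let ?I = "{(i, j). i < j \<and> j < length t \<and> t ! i > t ! j}"
  let ?f = "\<lambda>(i, j). (t ! i, t ! j)"
  have inj: "inj_on ?f ?I"
    using assms by (auto simp: inj_on_def nth_eq_iff_index_eq)
  have img: "?f ` ?I = invs t"
  proof
    show "?f ` ?I \<subseteq> invs t"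
      using assms by (auto simp: invs_def pos_nth)
    show "invs t \<subseteq> ?f ` ?I"
    proof
      fix x assume "x \<in> invs t"
      then obtain p q where x: "x = (p, q)" "p \<in> set t" "q \<in> set t" "q < p" "pos t p < pos t q"
        by (auto simp: invs_def)
      have "(pos t p, pos t q) \<in> ?I" using x pos_in[OF assms] by auto
      moreover have "?f (pos t p, pos t q) = x" using x pos_in[OF assms] by auto
      ultimately show "x \<in> ?f ` ?I" by force
    qed
  qed
  show ?thesis unfolding inv_count_def using card_image[OF inj] img by simp
qed

lemma id_perm_props: "distinct (id_perm n)" "length (id_perm n) = n" "set (id_perm n) = {1..n}"
  by (auto simp: id_perm_def)

lemma pos_id: "p \<in> {1..n} \<Longrightarrow> pos (id_perm n) p = p - 1"
proof -
  assume p: "p \<in> {1..n}"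
  have "id_perm n ! (p - 1) = p" using p by (auto simp: id_perm_def nth_upt simp del: upt_Suc)
  thus ?thesis using pos_nth[OF id_perm_props(1), of "p - 1" n] p id_perm_props(2) by auto
qed

lemma invs_id: "invs (id_perm n) = {}"
  by (auto simp: invs_def id_perm_props pos_id)

lemma reduced_good:
  assumes "a \<in> reduced_words n w"
  shows "good (id_perm n) a \<and> fold swap_pos a (id_perm n) = w \<and> distinct w \<and> set w = {1..n}"
proof -
  have a: "set a \<subseteq> {1..n - 1}" "length a = inv_count w" "fold swap_pos a (id_perm n) = w"
    using assms by (auto simp: reduced_words_def act_def)
  have v: "vl (id_perm n) a" unfolding vl_def id_perm_props
  proof
    fix c assume "c \<in> set a"
    hence "c \<in> {1..n - 1}" using a(1) by blast
    thus "1 \<le> c \<and> c < n" by auto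
  qed
  have fw: "distinct w \<and> set w = {1..n}" using fold_vl[OF v] a(3) id_perm_props by auto
  have "good (id_perm n) a"
  proof (rule ccontr)
    assume "\<not> good (id_perm n) a"
    hence "card (invs w) < length a" using count_bound[OF id_perm_props(1) v] a(3) invs_id by simp
    thus False using a(2) inv_count_invs fw by simp
  qed
  thus ?thesis using a fw by simp
qed

lemma good_take_drop: "good s a \<Longrightarrow> good s (take k a) \<and> good (fold swap_pos (take k a) s) (drop k a)"
  using good_append[of s "take k a" "drop k a"] by simp

lemma Es_take: "Es s (take k a) = take k (Es s a)"
  by (induction a arbitrary: s k) (auto simp: take_Cons split: nat.splits)

lemma Es_nth:
  assumes "k < length a"
  shows "Es s a ! k = (fold swap_pos (take k a) s ! (a ! k), fold swap_pos (take k a) s ! (a ! k - 1))"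
proof -
  have "drop k a = a ! k # drop (Suc k) a" using assms by (simp add: Cons_nth_drop_Suc)
  have "Es s a = Es s (take k a) @ Es (fold swap_pos (take k a) s) (drop k a)"
    by (metis append_take_drop_id Es_append)
  thus ?thesis using \<open>drop k a = _\<close> assms by (simp add: nth_append)
qed




fun lbef :: "'a list \<Rightarrow> 'a \<Rightarrow> 'a \<Rightarrow> bool" where
  "lbef [] e f = False"
| "lbef (x # xs) e f = ((x = e \<and> f \<in> set xs) \<or> lbef xs e f)"

lemma lbef_set: "lbef xs e f \<Longrightarrow> e \<in> set xs \<and> f \<in> set xs"
  by (induction xs) auto

lemma lbef_append: "lbef (xs @ ys) e f \<longleftrightarrow> lbef xs e f \<or> lbef ys e f \<or> (e \<in> set xs \<and> f \<in> set ys)"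
  by (induction xs) (auto dest: lbef_set)

lemma lbef_irrefl: "distinct xs \<Longrightarrow> \<not> lbef xs e e"
  by (induction xs) (auto dest: lbef_set)

lemma lbef_asym: "distinct xs \<Longrightarrow> lbef xs e f \<Longrightarrow> \<not> lbef xs f e"
  by (induction xs) (auto dest: lbef_set)

lemma lbef_total: "e \<in> set xs \<Longrightarrow> f \<in> set xs \<Longrightarrow> e \<noteq> f \<Longrightarrow> lbef xs e f \<or> lbef xs f e"
  by (induction xs) auto

lemma lbef_trans: "distinct xs \<Longrightarrow> lbef xs e f \<Longrightarrow> lbef xs f g \<Longrightarrow> lbef xs e g"
  by (induction xs) (auto dest: lbef_set)

lemma lbef_filter: "lbef (filter P xs) e f \<longleftrightarrow> P e \<and> P f \<and> lbef xs e f"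
  by (induction xs) auto

lemma lbef_take:
  assumes "distinct xs" "k < length xs"
  shows "e \<in> set (take k xs) \<longleftrightarrow> lbef xs e (xs ! k)"
proof -
  have xs: "xs = take k xs @ xs ! k # drop (Suc k) xs"
    using assms(2) by (simp add: id_take_nth_drop)
  have d: "distinct (take k xs @ xs ! k # drop (Suc k) xs)" using assms(1) xs by simp
  have "lbef xs e (xs ! k) \<longleftrightarrow> lbef (take k xs @ xs ! k # drop (Suc k) xs) e (xs ! k)"
    using xs by simp
  also have "\<dots> \<longleftrightarrow> e \<in> set (take k xs)"
    using d by (auto simp: lbef_append dest: lbef_set)
  finally show ?thesis by simp
qed

lemma lbef_idx:
  assumes "distinct xs" "i < length xs" "j < length xs"
  shows "lbef xs (xs ! i) (xs ! j) \<longleftrightarrow> i < j"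
proof -
  have "lbef xs (xs ! i) (xs ! j) \<longleftrightarrow> xs ! i \<in> set (take j xs)"
    using lbef_take[OF assms(1) assms(3)] by simp
  also have "\<dots> \<longleftrightarrow> i < j"
  proof
    assume "xs ! i \<in> set (take j xs)"
    then obtain i' where "i' < length (take j xs)" "take j xs ! i' = xs ! i"
      by (auto simp: in_set_conv_nth)
    thus "i < j" using assms nth_eq_iff_index_eq by fastforce
  next
    assume "i < j"
    thus "xs ! i \<in> set (take j xs)" using assms by (auto simp: in_set_conv_nth intro!: exI[of _ i])
  qed
  finally show ?thesis .
qed

lemma invs_mem: "(p, q) \<in> invs t \<longleftrightarrow> p \<in> set t \<and> q \<in> set t \<and> q < p \<and> pos t p < pos t q"
  by (simp add: invs_def)

lemma good_Es_props:
  assumes "good (id_perm n) a"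
  defines "w \<equiv> fold swap_pos a (id_perm n)"
  shows "distinct (Es (id_perm n) a)" "set (Es (id_perm n) a) = invs w"
    "distinct w" "set w = {1..n}" "length w = n"
  using Es_invs[OF assms(1) id_perm_props(1)] good_fold[OF assms(1)] invs_id id_perm_props
  unfolding w_def by auto

lemma pos_lt_invs:
  assumes "distinct t" "p \<in> set t" "q \<in> set t" "p \<noteq> q"
  shows "pos t p < pos t q \<longleftrightarrow> (if q < p then (p, q) \<in> invs t else (q, p) \<notin> invs t)"
proof -
  have "pos t p \<noteq> pos t q" using pos_in[OF assms(1)] assms by metis
  thus ?thesis using assms by (auto simp: invs_mem)
qed

lemma step_constraint:
  assumes g: "good (id_perm n) a" and k: "k < length a"
    and Ek: "Es (id_perm n) a ! k = (v, u)" and r: "r \<in> {1..n}" "r \<noteq> u" "r \<noteq> v"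
  defines "E \<equiv> Es (id_perm n) a"
  shows "u < v \<and> ((if u < r then lbef E (r, u) (v, u) else \<not> lbef E (u, r) (v, u)) \<longleftrightarrow>
               (if v < r then lbef E (r, v) (v, u) else \<not> lbef E (v, r) (v, u)))"
proof -
  define t where "t = fold swap_pos (take k a) (id_perm n)"
  define c where "c = a ! k"
  have gt: "good (id_perm n) (take k a)" and gd: "good t (drop k a)"
    using good_take_drop[OF g] unfolding t_def by auto
  have dk: "drop k a = c # drop (Suc k) a" using k unfolding c_def by (simp add: Cons_nth_drop_Suc)
  have cg: "1 \<le> c" "c < length t" "t ! (c - 1) < t ! c" using gd dk by auto
  have tp: "distinct t" "set t = {1..n}" using good_Es_props[OF gt] unfolding t_def by auto
  have uv: "v = t ! c" "u = t ! (c - 1)" using Es_nth[OF k, of "id_perm n"] Ek unfolding t_def c_def by auto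
  have ult: "u < v" using uv cg by simp
  have pu: "pos t u = c - 1" "pos t v = c" using uv pos_nth tp cg by auto
  have rin: "r \<in> set t" using r tp by simp
  have adj: "pos t r < pos t u \<longleftrightarrow> pos t r < pos t v"
    using pos_other[OF tp(1) cg(1,2) rin] r uv pu by auto
  have S: "invs t = set (take k E)"
    using good_Es_props(2)[OF gt] Es_take unfolding t_def E_def by simp
  have dE: "distinct E" using good_Es_props(1)[OF g] unfolding E_def .
  have kE: "k < length E" using k unfolding E_def by simp
  have mem: "\<And>e. e \<in> invs t \<longleftrightarrow> lbef E e (v, u)"
    using S lbef_take[OF dE kE] Ek unfolding E_def by simp
  have uin: "u \<in> set t" "v \<in> set t" using uv cg by auto
  have i1: "pos t r < pos t u \<longleftrightarrow> (if u < r then lbef E (r, u) (v, u) else \<not> lbef E (u, r) (v, u))"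
    using pos_lt_invs[OF tp(1) rin uin(1) r(2)] mem by simp
  have i2: "pos t r < pos t v \<longleftrightarrow> (if v < r then lbef E (r, v) (v, u) else \<not> lbef E (v, r) (v, u))"
    using pos_lt_invs[OF tp(1) rin uin(2) r(3)] mem by simp
  show ?thesis using ult adj i1 i2 by simp
qed

lemma tri_shape:
  assumes g: "good (id_perm n) a" and xyz: "x < y" "y < z" "y \<in> {1..n}"
  defines "E \<equiv> Es (id_perm n) a"
  shows "(z, x) \<in> set E \<Longrightarrow> lbef E (y, x) (z, x) \<longleftrightarrow> \<not> lbef E (z, y) (z, x)"
proof -
  assume zx: "(z, x) \<in> set E"
  then obtain k where k: "k < length E" "E ! k = (z, x)" by (auto simp: in_set_conv_nth)
  show ?thesis using step_constraint[OF g, of k z x y] k xyz unfolding E_def by auto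
qed




definition indep :: "nat \<times> nat \<Rightarrow> nat \<times> nat \<Rightarrow> bool" where
  "indep g h \<longleftrightarrow> {fst g, snd g} \<inter> {fst h, snd h} = {}"

lemma base_comm:
  assumes d: "distinct s" and r: "1 \<le> i" "i < length s" "1 \<le> j" "j < length s"
    and ij: "i \<ge> j + 2 \<or> j \<ge> i + 2"
  shows "fold swap_pos [i, j] s = fold swap_pos [j, i] s"
    "Es s (i # j # v) = (s ! i, s ! (i - 1)) # (s ! j, s ! (j - 1)) # Es (fold swap_pos [i, j] s) v"
    "Es s (j # i # v) = (s ! j, s ! (j - 1)) # (s ! i, s ! (i - 1)) # Es (fold swap_pos [i, j] s) v"
    "good s (i # j # v) \<longleftrightarrow> s ! (i - 1) < s ! i \<and> s ! (j - 1) < s ! j \<and> good (fold swap_pos [i, j] s) v"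
    "good s (j # i # v) \<longleftrightarrow> s ! (i - 1) < s ! i \<and> s ! (j - 1) < s ! j \<and> good (fold swap_pos [i, j] s) v"
    "indep (s ! i, s ! (i - 1)) (s ! j, s ! (j - 1))"
proof -
  have c: "swap_pos j (swap_pos i s) = swap_pos i (swap_pos j s)"
    using swap_comm[OF r(1,2) r(3,4)] ij by (metis swap_comm r)
  show f: "fold swap_pos [i, j] s = fold swap_pos [j, i] s" using c by simp
  have a1: "swap_pos i s ! j = s ! j" "swap_pos i s ! (j - 1) = s ! (j - 1)"
    using r ij by (auto simp: swap_nth)
  have a2: "swap_pos j s ! i = s ! i" "swap_pos j s ! (i - 1) = s ! (i - 1)"
    using r ij by (auto simp: swap_nth)
  show "Es s (i # j # v) = (s ! i, s ! (i - 1)) # (s ! j, s ! (j - 1)) # Es (fold swap_pos [i, j] s) v"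
    using a1 by simp
  show "Es s (j # i # v) = (s ! j, s ! (j - 1)) # (s ! i, s ! (i - 1)) # Es (fold swap_pos [i, j] s) v"
    using a2 c by simp
  show "good s (i # j # v) \<longleftrightarrow> s ! (i - 1) < s ! i \<and> s ! (j - 1) < s ! j \<and> good (fold swap_pos [i, j] s) v"
    using a1 r by auto
  show "good s (j # i # v) \<longleftrightarrow> s ! (i - 1) < s ! i \<and> s ! (j - 1) < s ! j \<and> good (fold swap_pos [i, j] s) v"
    using a2 r c by auto
  have "i \<noteq> j" "i \<noteq> j - 1" "i - 1 \<noteq> j" "i - 1 \<noteq> j - 1" using ij r by auto
  moreover have dn: "\<And>p q. p < length s \<Longrightarrow> q < length s \<Longrightarrow> p \<noteq> q \<Longrightarrow> s ! p \<noteq> s ! q"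
    using nth_eq_iff_index_eq[OF d] by blast
  ultimately have "s ! i \<noteq> s ! j" "s ! i \<noteq> s ! (j - 1)" "s ! (i - 1) \<noteq> s ! j" "s ! (i - 1) \<noteq> s ! (j - 1)"
    using r by (auto intro!: dn)
  thus "indep (s ! i, s ! (i - 1)) (s ! j, s ! (j - 1))" by (auto simp: indep_def)
qed

lemma base_braid:
  assumes d: "distinct s" and r: "1 \<le> i" "i + 1 < length s"
  defines "\<alpha> \<equiv> s ! (i - 1)" and "\<beta> \<equiv> s ! i" and "\<gamma> \<equiv> s ! (i + 1)"
  shows "fold swap_pos [i, i + 1, i] s = fold swap_pos [i + 1, i, i + 1] s"
    "Es s (i # (i + 1) # i # v) = (\<beta>, \<alpha>) # (\<gamma>, \<alpha>) # (\<gamma>, \<beta>) # Es (fold swap_pos [i, i + 1, i] s) v"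
    "Es s ((i + 1) # i # (i + 1) # v) = (\<gamma>, \<beta>) # (\<gamma>, \<alpha>) # (\<beta>, \<alpha>) # Es (fold swap_pos [i, i + 1, i] s) v"
    "good s (i # (i + 1) # i # v) \<longleftrightarrow> \<alpha> < \<beta> \<and> \<beta> < \<gamma> \<and> good (fold swap_pos [i, i + 1, i] s) v"
    "good s ((i + 1) # i # (i + 1) # v) \<longleftrightarrow> \<alpha> < \<beta> \<and> \<beta> < \<gamma> \<and> good (fold swap_pos [i, i + 1, i] s) v"
proof -
  define s1 where "s1 = swap_pos i s"
  define s2 where "s2 = swap_pos (i + 1) s1"
  define s3 where "s3 = swap_pos i s2"
  define t1 where "t1 = swap_pos (i + 1) s"
  define t2 where "t2 = swap_pos i t1"
  define t3 where "t3 = swap_pos (i + 1) t2"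
  have L: "length s1 = length s" "length s2 = length s" "length s3 = length s"
     "length t1 = length s" "length t2 = length s" "length t3 = length s"
    unfolding s1_def s2_def s3_def t1_def t2_def t3_def by simp_all
  have n1: "\<And>j. j < length s \<Longrightarrow> s1 ! j = (if j = i - 1 then \<beta> else if j = i then \<alpha> else s ! j)"
    unfolding s1_def \<alpha>_def \<beta>_def using r by (simp add: swap_nth)
  have n2: "\<And>j. j < length s \<Longrightarrow> s2 ! j = (if j = i - 1 then \<beta> else if j = i then \<gamma> else if j = i + 1 then \<alpha> else s ! j)"
    unfolding s2_def using r n1 L by (auto simp: swap_nth \<gamma>_def)
  have n3: "\<And>j. j < length s \<Longrightarrow> s3 ! j = (if j = i - 1 then \<gamma> else if j = i then \<beta> else if j = i + 1 then \<alpha> else s ! j)"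
    unfolding s3_def using r n2 L by (auto simp: swap_nth \<alpha>_def \<beta>_def \<gamma>_def)
  have m1: "\<And>j. j < length s \<Longrightarrow> t1 ! j = (if j = i then \<gamma> else if j = i + 1 then \<beta> else s ! j)"
    unfolding t1_def \<gamma>_def \<beta>_def using r by (auto simp: swap_nth)
  have m2: "\<And>j. j < length s \<Longrightarrow> t2 ! j = (if j = i - 1 then \<gamma> else if j = i then \<alpha> else if j = i + 1 then \<beta> else s ! j)"
    unfolding t2_def using r m1 L by (auto simp: swap_nth \<alpha>_def)
  have m3: "\<And>j. j < length s \<Longrightarrow> t3 ! j = (if j = i - 1 then \<gamma> else if j = i then \<beta> else if j = i + 1 then \<alpha> else s ! j)"
    unfolding t3_def using r m2 L by (auto simp: swap_nth \<alpha>_def \<beta>_def \<gamma>_def)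
  have eq: "s3 = t3" by (rule nth_equalityI) (use L n3 m3 in auto)
  have f1: "fold swap_pos [i, i + 1, i] s = s3" unfolding s1_def s2_def s3_def by simp
  have f2: "fold swap_pos [i + 1, i, i + 1] s = t3" unfolding t1_def t2_def t3_def by simp
  show "fold swap_pos [i, i + 1, i] s = fold swap_pos [i + 1, i, i + 1] s" using f1 f2 eq by simp
  have i1: "i - 1 < length s" "i < length s" using r by auto
  have e1: "s1 ! (i + 1) = \<gamma>" "s1 ! i = \<alpha>" "s2 ! i = \<gamma>" "s2 ! (i - 1) = \<beta>"
    using n1 n2 r by (auto simp: \<gamma>_def)
  have e2: "t1 ! i = \<gamma>" "t1 ! (i - 1) = \<alpha>" "t2 ! (i + 1) = \<beta>" "t2 ! i = \<alpha>"
    using m1 m2 r by (auto simp: \<alpha>_def)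
  show "Es s (i # (i + 1) # i # v) = (\<beta>, \<alpha>) # (\<gamma>, \<alpha>) # (\<gamma>, \<beta>) # Es (fold swap_pos [i, i + 1, i] s) v"
    using e1 f1 unfolding \<alpha>_def \<beta>_def s1_def s2_def s3_def by simp
  show "Es s ((i + 1) # i # (i + 1) # v) = (\<gamma>, \<beta>) # (\<gamma>, \<alpha>) # (\<beta>, \<alpha>) # Es (fold swap_pos [i, i + 1, i] s) v"
    using e2 f1 f2 eq unfolding \<beta>_def \<gamma>_def t1_def t2_def t3_def by simp
  show "good s (i # (i + 1) # i # v) \<longleftrightarrow> \<alpha> < \<beta> \<and> \<beta> < \<gamma> \<and> good (fold swap_pos [i, i + 1, i] s) v"
    using e1 f1 r L unfolding \<alpha>_def \<beta>_def s1_def s2_def s3_def by auto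
  show "good s ((i + 1) # i # (i + 1) # v) \<longleftrightarrow> \<alpha> < \<beta> \<and> \<beta> < \<gamma> \<and> good (fold swap_pos [i, i + 1, i] s) v"
    using e2 f1 f2 eq r L unfolding \<beta>_def \<gamma>_def t1_def t2_def t3_def by auto
qed


lemma comm_cons: "comm_step a b \<Longrightarrow> comm_step (c # a) (c # b)"
  unfolding comm_step_def by (metis append_Cons)

lemma braid_cons: "braid_step a b \<Longrightarrow> braid_step (c # a) (c # b)"
  unfolding braid_step_def by (metis append_Cons)

lemma comm_sym: "comm_step a b \<Longrightarrow> comm_step b a"
  unfolding comm_step_def by blast

lemma comm_E_aux:
  "good s (u @ [i, j] @ v) \<Longrightarrow> distinct s \<Longrightarrow> (i \<ge> j + 2 \<or> j \<ge> i + 2) \<Longrightarrow>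
   good s (u @ [j, i] @ v) \<and> fold swap_pos (u @ [j, i] @ v) s = fold swap_pos (u @ [i, j] @ v) s \<and>
   (\<exists>pre g h post. Es s (u @ [i, j] @ v) = pre @ g # h # post \<and> Es s (u @ [j, i] @ v) = pre @ h # g # post
      \<and> indep g h)"
proof (induction u arbitrary: s)
  case Nil
  have r: "1 \<le> i" "i < length s" "1 \<le> j" "j < length s" using Nil.prems(1) by auto
  note bc = base_comm[OF Nil.prems(2) r Nil.prems(3)]
  show ?case
  proof (intro conjI)
    show "good s ([] @ [j, i] @ v)" using bc Nil.prems(1) r by simp
    show "fold swap_pos ([] @ [j, i] @ v) s = fold swap_pos ([] @ [i, j] @ v) s"
      using bc(1) by simp
    show "\<exists>pre g h post. Es s ([] @ [i, j] @ v) = pre @ g # h # post \<and> Es s ([] @ [j, i] @ v) = pre @ h # g # post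
      \<and> indep g h"
      using bc by (intro exI[of _ "[]"]) auto
  qed
next
  case (Cons c u)
  let ?s' = "swap_pos c s"
  have g: "1 \<le> c" "c < length s" "good ?s' (u @ [i, j] @ v)" using Cons.prems(1) by auto
  have d': "distinct ?s'" using swap_set_distinct g Cons.prems(2) by simp
  note IH = Cons.IH[OF g(3) d' Cons.prems(3)]
  then obtain pre g0 h post where P: "Es ?s' (u @ [i, j] @ v) = pre @ g0 # h # post"
    "Es ?s' (u @ [j, i] @ v) = pre @ h # g0 # post" "indep g0 h" by blast
  show ?case
  proof (intro conjI)
    show "good s ((c # u) @ [j, i] @ v)" using IH Cons.prems(1) by simp
    show "fold swap_pos ((c # u) @ [j, i] @ v) s = fold swap_pos ((c # u) @ [i, j] @ v) s"
      using IH by simp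
    show "\<exists>pre g h post. Es s ((c # u) @ [i, j] @ v) = pre @ g # h # post \<and> Es s ((c # u) @ [j, i] @ v) = pre @ h # g # post
      \<and> indep g h"
      using P by (intro exI[of _ "(s ! c, s ! (c - 1)) # pre"]) auto
  qed
qed

lemma comm_E:
  assumes "good s a" "distinct s" "comm_step a a'"
  shows "good s a' \<and> fold swap_pos a' s = fold swap_pos a s \<and>
    (\<exists>pre g h post. Es s a = pre @ g # h # post \<and> Es s a' = pre @ h # g # post \<and> indep g h)"
proof -
  obtain u v i j where "i \<ge> j + 2 \<or> j \<ge> i + 2" "a = u @ [i, j] @ v" "a' = u @ [j, i] @ v"
    using assms(3) unfolding comm_step_def by blast
  thus ?thesis using comm_E_aux[of s u i j v] assms(1,2) by simp
qed

lemma swap1: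
  "good s a \<Longrightarrow> distinct s \<Longrightarrow> Es s a = pre @ g # h # post \<Longrightarrow> indep g h \<Longrightarrow>
   \<exists>a'. comm_step a a' \<and> good s a' \<and> fold swap_pos a' s = fold swap_pos a s \<and> Es s a' = pre @ h # g # post"
proof (induction pre arbitrary: s a)
  case Nil
  obtain c1 c2 rest where a: "a = c1 # c2 # rest"
    using Nil.prems(3) by (cases a; cases "tl a") auto
  let ?s1 = "swap_pos c1 s"
  have r: "1 \<le> c1" "c1 < length s" "1 \<le> c2" "c2 < length s" using Nil.prems(1) a by auto
  have gh: "g = (s ! c1, s ! (c1 - 1))" "h = (?s1 ! c2, ?s1 ! (c2 - 1))" using Nil.prems(3) a by auto
  have d1: "distinct ?s1" using swap_set_distinct r Nil.prems(2) by simp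
  have ij: "c1 \<ge> c2 + 2 \<or> c2 \<ge> c1 + 2"
  proof (rule ccontr)
    assume "\<not> ?thesis"
    hence "c2 = c1 \<or> c2 = c1 + 1 \<or> c2 + 1 = c1" by auto
    moreover have "c2 = c1 \<Longrightarrow> False"
    proof -
      assume "c2 = c1"
      hence "?s1 ! c2 = s ! (c1 - 1)" using r by (simp add: swap_nth)
      thus False using Nil.prems(4) gh by (auto simp: indep_def)
    qed
    moreover have "c2 = c1 + 1 \<Longrightarrow> False"
    proof -
      assume "c2 = c1 + 1"
      hence "?s1 ! (c2 - 1) = s ! (c1 - 1)" using r by (simp add: swap_nth)
      thus False using Nil.prems(4) gh by (auto simp: indep_def)
    qed
    moreover have "c2 + 1 = c1 \<Longrightarrow> False"
    proof -
      assume "c2 + 1 = c1"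
      hence "?s1 ! c2 = s ! c1" using r by (auto simp: swap_nth)
      thus False using Nil.prems(4) gh by (auto simp: indep_def)
    qed
    ultimately show False by blast
  qed
  note bc = base_comm[OF Nil.prems(2) r ij]
  have h2: "h = (s ! c2, s ! (c2 - 1))"
    using gh(2) r ij by (auto simp: swap_nth)
  show ?case
  proof (intro exI conjI)
    have "a = [] @ [c1, c2] @ rest \<and> c2 # c1 # rest = [] @ [c2, c1] @ rest" using a by simp
    thus "comm_step a (c2 # c1 # rest)" unfolding comm_step_def using ij by blast
    show "good s (c2 # c1 # rest)" using bc Nil.prems(1) a r by simp
    show "fold swap_pos (c2 # c1 # rest) s = fold swap_pos a s" using bc(1) a by simp
    show "Es s (c2 # c1 # rest) = [] @ h # g # post"
      using bc(2,3) Nil.prems(3) a gh(1) h2 by auto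
  qed
next
  case (Cons e pre)
  obtain c a0 where a: "a = c # a0" using Cons.prems(3) by (cases a) auto
  let ?s' = "swap_pos c s"
  have g: "1 \<le> c" "c < length s" "good ?s' a0" using Cons.prems(1) a by auto
  have d': "distinct ?s'" using swap_set_distinct g Cons.prems(2) by simp
  have E': "Es ?s' a0 = pre @ g # h # post" using Cons.prems(3) a by simp
  obtain a0' where A: "comm_step a0 a0'" "good ?s' a0'" "fold swap_pos a0' ?s' = fold swap_pos a0 ?s'"
    "Es ?s' a0' = pre @ h # g # post"
    using Cons.IH[OF g(3) d' E' Cons.prems(4)] by blast
  show ?case
  proof (intro exI conjI)
    show "comm_step a (c # a0')" using comm_cons[OF A(1)] a by simp
    show "good s (c # a0')" using A(2) g Cons.prems(1) a by simp
    show "fold swap_pos (c # a0') s = fold swap_pos a s" using A(3) a by simp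
    show "Es s (c # a0') = (e # pre) @ h # g # post" using A(4) Cons.prems(3) a by simp
  qed
qed




definition blk1 :: "nat \<Rightarrow> nat \<Rightarrow> nat \<Rightarrow> (nat \<times> nat) list" where
  "blk1 x y z = [(y, x), (z, x), (z, y)]"

lemma braid_E_aux:
  "distinct s \<Longrightarrow>
   (good s (u @ [i, i + 1, i] @ v) \<longleftrightarrow> good s (u @ [i + 1, i, i + 1] @ v)) \<and>
   (good s (u @ [i, i + 1, i] @ v) \<longrightarrow>
     fold swap_pos (u @ [i + 1, i, i + 1] @ v) s = fold swap_pos (u @ [i, i + 1, i] @ v) s \<and>
     (\<exists>pre post x y z. x < y \<and> y < z \<and> Es s (u @ [i, i + 1, i] @ v) = pre @ blk1 x y z @ post
        \<and> Es s (u @ [i + 1, i, i + 1] @ v) = pre @ rev (blk1 x y z) @ post))"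
proof (induction u arbitrary: s)
  case Nil
  have eq: "good s ([] @ [i, i + 1, i] @ v) \<longleftrightarrow> good s ([] @ [i + 1, i, i + 1] @ v)"
  proof (cases "1 \<le> i \<and> i + 1 < length s")
    case True
    note bb = base_braid[OF Nil True[THEN conjunct1] True[THEN conjunct2]]
    show ?thesis by (simp only: append.simps bb(4) bb(5))
  next
    case False
    have "\<not> good s ([] @ [i, i + 1, i] @ v)" using False by auto
    moreover have "\<not> good s ([] @ [i + 1, i, i + 1] @ v)" using False by auto
    ultimately show ?thesis by blast
  qed
  show ?case
  proof (intro conjI impI)
    show "good s ([] @ [i, i + 1, i] @ v) \<longleftrightarrow> good s ([] @ [i + 1, i, i + 1] @ v)" by (rule eq)
    assume g: "good s ([] @ [i, i + 1, i] @ v)"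
    have r: "1 \<le> i" "i + 1 < length s" using g by auto
    note bb = base_braid[OF Nil r]
    show "fold swap_pos ([] @ [i + 1, i, i + 1] @ v) s = fold swap_pos ([] @ [i, i + 1, i] @ v) s"
      using bb(1) by simp
    show "\<exists>pre post x y z. x < y \<and> y < z \<and> Es s ([] @ [i, i + 1, i] @ v) = pre @ blk1 x y z @ post
        \<and> Es s ([] @ [i + 1, i, i + 1] @ v) = pre @ rev (blk1 x y z) @ post"
      using bb(2,3,4) g
      by (intro exI[of _ "[]"] exI[of _ "Es (fold swap_pos [i, i + 1, i] s) v"] exI[of _ "s ! (i - 1)"]
          exI[of _ "s ! i"] exI[of _ "s ! (i + 1)"]) (auto simp: blk1_def)
  qed
next
  case (Cons c u)
  let ?s' = "swap_pos c s"
  show ?case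
  proof (cases "1 \<le> c \<and> c < length s")
    case False
    thus ?thesis by auto
  next
    case True
    have d': "distinct ?s'" using swap_set_distinct True Cons.prems by simp
    note IH = Cons.IH[OF d']
    show ?thesis
    proof (intro conjI impI)
      show "good s ((c # u) @ [i, i + 1, i] @ v) = good s ((c # u) @ [i + 1, i, i + 1] @ v)"
        using IH by simp
      assume g: "good s ((c # u) @ [i, i + 1, i] @ v)"
      hence g': "good ?s' (u @ [i, i + 1, i] @ v)" by simp
      show "fold swap_pos ((c # u) @ [i + 1, i, i + 1] @ v) s = fold swap_pos ((c # u) @ [i, i + 1, i] @ v) s"
        using IH g' by simp
      obtain pre post x y z where P: "x < y" "y < z" "Es ?s' (u @ [i, i + 1, i] @ v) = pre @ blk1 x y z @ post"
        "Es ?s' (u @ [i + 1, i, i + 1] @ v) = pre @ rev (blk1 x y z) @ post" using IH g' by blast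
      show "\<exists>pre post x y z. x < y \<and> y < z \<and> Es s ((c # u) @ [i, i + 1, i] @ v) = pre @ blk1 x y z @ post
        \<and> Es s ((c # u) @ [i + 1, i, i + 1] @ v) = pre @ rev (blk1 x y z) @ post"
        using P by (intro exI[of _ "(s ! c, s ! (c - 1)) # pre"] exI[of _ post] exI[of _ x] exI[of _ y] exI[of _ z]) auto
    qed
  qed
qed

lemma braid_E:
  assumes "good s a" "distinct s" "braid_step a b"
  shows "good s b \<and> fold swap_pos b s = fold swap_pos a s \<and>
    (\<exists>pre post x y z. x < y \<and> y < z \<and>
      ((Es s a = pre @ blk1 x y z @ post \<and> Es s b = pre @ rev (blk1 x y z) @ post) \<or>
       (Es s a = pre @ rev (blk1 x y z) @ post \<and> Es s b = pre @ blk1 x y z @ post)))"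
proof -
  obtain u v i where "(a = u @ [i, i + 1, i] @ v \<and> b = u @ [i + 1, i, i + 1] @ v) \<or>
      (a = u @ [i + 1, i, i + 1] @ v \<and> b = u @ [i, i + 1, i] @ v)"
    using assms(3) unfolding braid_step_def by blast
  thus ?thesis
  proof
    assume ab: "a = u @ [i, i + 1, i] @ v \<and> b = u @ [i + 1, i, i + 1] @ v"
    show ?thesis using braid_E_aux[OF assms(2), of u i v] ab assms(1) by metis
  next
    assume ab: "a = u @ [i + 1, i, i + 1] @ v \<and> b = u @ [i, i + 1, i] @ v"
    show ?thesis using braid_E_aux[OF assms(2), of u i v] ab assms(1) by metis
  qed
qed


lemma dist_idx: "distinct t \<Longrightarrow> p < length t \<Longrightarrow> q < length t \<Longrightarrow> t ! p = t ! q \<Longrightarrow> p = q"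
  using nth_eq_iff_index_eq by blast

lemma braid_conv_base:
  assumes g: "good s a" and d: "distinct s" and xyz: "x < y" "y < z"
    and E: "Es s a = K @ post" and K: "K = blk1 x y z \<or> K = rev (blk1 x y z)"
  shows "\<exists>b. braid_step a b \<and> good s b \<and> fold swap_pos b s = fold swap_pos a s \<and> Es s b = rev K @ post"
proof -
  have lK: "length K = 3" using K by (auto simp: blk1_def)
  obtain c1 c2 c3 rest where a: "a = c1 # c2 # c3 # rest"
    using E lK Es_length[of s a] by (cases a; cases "tl a"; cases "tl (tl a)") auto
  define s1 where "s1 = swap_pos c1 s"
  define s2 where "s2 = swap_pos c2 s1"
  have r: "1 \<le> c1" "c1 < length s" "1 \<le> c2" "c2 < length s" "1 \<le> c3" "c3 < length s"
    using g unfolding a by auto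
  have d1: "distinct s1" unfolding s1_def using swap_set_distinct r d by simp
  have L: "length s1 = length s" "length s2 = length s" unfolding s1_def s2_def by simp_all
  have Ea: "Es s a = (s ! c1, s ! (c1 - 1)) # (s1 ! c2, s1 ! (c2 - 1)) # (s2 ! c3, s2 ! (c3 - 1))
      # Es (swap_pos c3 s2) rest" unfolding a s1_def s2_def by simp
  have post: "post = Es (swap_pos c3 s2) rest"
  proof -
    have "post = drop 3 (K @ post)" using lK by simp
    also have "\<dots> = drop 3 (Es s a)" using E by simp
    also have "\<dots> = Es (swap_pos c3 s2) rest" using Ea by (simp add: numeral_3_eq_3)
    finally show ?thesis .
  qed
  have d2: "distinct s2" unfolding s2_def using swap_set_distinct r d1 L by simp
  from K show ?thesis
  proof
    assume K1: "K = blk1 x y z"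
    have e: "s ! c1 = y" "s ! (c1 - 1) = x" "s1 ! c2 = z" "s1 ! (c2 - 1) = x" "s2 ! c3 = z" "s2 ! (c3 - 1) = y"
      using E Ea K1 by (auto simp: blk1_def)
    have "s1 ! c1 = s ! (c1 - 1)" unfolding s1_def using r by (simp add: swap_nth)
    hence "s1 ! c1 = x" using e by simp
    note prev = this
    have "c2 - 1 = c1" by (rule dist_idx[OF d1]) (use e r L prev in auto)
    hence c2: "c2 = c1 + 1" using r by simp
    have "s2 ! (c1 - 1) = s ! c1" using r c2 L unfolding s2_def s1_def by (auto simp: swap_nth)
    hence "s2 ! (c1 - 1) = y" using e by simp
    note prev = this
    have "c3 - 1 = c1 - 1" by (rule dist_idx[OF d2]) (use e r L prev in auto)
    hence c3: "c3 = c1" using r by simp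
    have r2: "c1 + 1 < length s" using r c2 by simp
    note bb = base_braid[OF d r(1) r2]
    have a2: "a = c1 # (c1 + 1) # c1 # rest" using a c2 c3 by simp
    define b where "b = (c1 + 1) # c1 # (c1 + 1) # rest"
    have "braid_step a b" unfolding braid_step_def a2 b_def
      by (rule exI[of _ "[]"], rule exI[of _ rest], rule exI[of _ c1]) simp
    moreover have "good s b" using g bb(4,5) unfolding a2 b_def by blast
    moreover have "fold swap_pos b s = fold swap_pos a s" using bb(1) unfolding a2 b_def by simp
    moreover have "Es s b = rev K @ post"
    proof -
      have "Es s a = (s ! c1, s ! (c1 - 1)) # (s ! (c1 + 1), s ! (c1 - 1)) # (s ! (c1 + 1), s ! c1) #
           Es (fold swap_pos [c1, c1 + 1, c1] s) rest" using bb(2) unfolding a2 .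
      hence "Es (fold swap_pos [c1, c1 + 1, c1] s) rest = post" "s ! (c1 + 1) = z"
        using E K1 by (auto simp: blk1_def)
      thus ?thesis using bb(3) e K1 unfolding b_def by (auto simp: blk1_def)
    qed
    ultimately show ?thesis by blast
  next
    assume K2: "K = rev (blk1 x y z)"
    have e: "s ! c1 = z" "s ! (c1 - 1) = y" "s1 ! c2 = z" "s1 ! (c2 - 1) = x" "s2 ! c3 = y" "s2 ! (c3 - 1) = x"
      using E Ea K2 by (auto simp: blk1_def)
    have "s1 ! (c1 - 1) = s ! c1" unfolding s1_def using r by (simp add: swap_nth)
    hence "s1 ! (c1 - 1) = z" using e by simp
    note prev = this
    have c2: "c2 = c1 - 1" by (rule dist_idx[OF d1]) (use e r L prev in auto)
    define i where "i = c2"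
    have c1: "c1 = i + 1" using c2 r unfolding i_def by simp
    have "s2 ! c1 = s ! (c1 - 1)" using r c2 L unfolding s2_def s1_def by (auto simp: swap_nth)
    hence "s2 ! c1 = y" using e by simp
    note prev = this
    have c3: "c3 = c1" by (rule dist_idx[OF d2]) (use e r L prev in auto)
    have ri: "1 \<le> i" "i + 1 < length s" using r c1 unfolding i_def by auto
    note bb = base_braid[OF d ri]
    have a2: "a = (i + 1) # i # (i + 1) # rest" using a c1 c3 unfolding i_def by simp
    define b where "b = i # (i + 1) # i # rest"
    have "braid_step a b" unfolding braid_step_def a2 b_def
      by (rule exI[of _ "[]"], rule exI[of _ rest], rule exI[of _ i]) simp
    moreover have "good s b" using g bb(4,5) unfolding a2 b_def by blast
    moreover have "fold swap_pos b s = fold swap_pos a s" using bb(1) unfolding a2 b_def by simp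
    moreover have "Es s b = rev K @ post"
    proof -
      have "Es s a = (s ! (i + 1), s ! i) # (s ! (i + 1), s ! (i - 1)) # (s ! i, s ! (i - 1)) #
           Es (fold swap_pos [i, i + 1, i] s) rest" using bb(3) unfolding a2 .
      hence "Es (fold swap_pos [i, i + 1, i] s) rest = post" "s ! (i - 1) = x" "s ! i = y" "s ! (i + 1) = z"
        using E K2 by (auto simp: blk1_def)
      thus ?thesis using bb(2) K2 unfolding b_def by (auto simp: blk1_def)
    qed
    ultimately show ?thesis by blast
  qed
qed

lemma braid_conv:
  "good s a \<Longrightarrow> distinct s \<Longrightarrow> x < y \<Longrightarrow> y < z \<Longrightarrow> Es s a = pre @ K @ post \<Longrightarrow>
   K = blk1 x y z \<or> K = rev (blk1 x y z) \<Longrightarrow>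
   \<exists>b. braid_step a b \<and> good s b \<and> fold swap_pos b s = fold swap_pos a s \<and> Es s b = pre @ rev K @ post"
proof (induction pre arbitrary: s a)
  case Nil
  thus ?case using braid_conv_base by simp
next
  case (Cons e pre)
  obtain c a0 where a: "a = c # a0" using Cons.prems(5) by (cases a) auto
  let ?s' = "swap_pos c s"
  have g: "1 \<le> c" "c < length s" "good ?s' a0" using Cons.prems(1) a by auto
  have d': "distinct ?s'" using swap_set_distinct g Cons.prems(2) by simp
  have E': "Es ?s' a0 = pre @ K @ post" using Cons.prems(5) a by simp
  obtain b0 where B: "braid_step a0 b0" "good ?s' b0" "fold swap_pos b0 ?s' = fold swap_pos a0 ?s'"
    "Es ?s' b0 = pre @ rev K @ post"
    using Cons.IH[OF g(3) d' Cons.prems(3,4) E' Cons.prems(6)] by blast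
  show ?case
  proof (intro exI conjI)
    show "braid_step a (c # b0)" using braid_cons[OF B(1)] a by simp
    show "good s (c # b0)" using B(2) g Cons.prems(1) a by simp
    show "fold swap_pos (c # b0) s = fold swap_pos a s" using B(3) a by simp
    show "Es s (c # b0) = (e # pre) @ rev K @ post" using B(4) Cons.prems(5) a by simp
  qed
qed




lemma indep_sym: "indep g h \<Longrightarrow> indep h g"
  by (auto simp: indep_def)

lemma lbef_swap_adj:
  assumes "(e, f) \<noteq> (g, h)" "(e, f) \<noteq> (h, g)"
  shows "lbef (pre @ g # h # post) e f \<longleftrightarrow> lbef (pre @ h # g # post) e f"
  using assms by (auto simp: lbef_append)

lemma comm_star_lift: "comm_step\<^sup>*\<^sup>* x y \<Longrightarrow> comm_step\<^sup>*\<^sup>* (c # x) (c # y)"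
  by (induction rule: rtranclp_induct) (auto intro: rtranclp.rtrancl_into_rtrancl comm_cons)

lemma comm_star_sym: "comm_step\<^sup>*\<^sup>* x y \<Longrightarrow> comm_step\<^sup>*\<^sup>* y x"
  by (induction rule: rtranclp_induct) (auto intro: converse_rtranclp_into_rtranclp comm_sym)

lemma comm_star_props:
  assumes "comm_step\<^sup>*\<^sup>* a a'" "good s a" "distinct s"
  shows "good s a' \<and> fold swap_pos a' s = fold swap_pos a s \<and> set (Es s a') = set (Es s a) \<and>
    (\<forall>e f. \<not> indep e f \<longrightarrow> (lbef (Es s a') e f \<longleftrightarrow> lbef (Es s a) e f))"
  using assms(1)
proof (induction rule: rtranclp_induct)
  case base
  then show ?case using assms by simp
next
  case (step y z)
  have gy: "good s y" using step.IH by simp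
  obtain pre g h post where P: "Es s y = pre @ g # h # post" "Es s z = pre @ h # g # post" "indep g h"
    and gz: "good s z" and fz: "fold swap_pos z s = fold swap_pos y s"
    using comm_E[OF gy assms(3) step.hyps(2)] by blast
  have "\<forall>e f. \<not> indep e f \<longrightarrow> (lbef (Es s z) e f \<longleftrightarrow> lbef (Es s y) e f)"
  proof (intro allI impI)
    fix e f assume "\<not> indep e f"
    hence "(e, f) \<noteq> (g, h)" "(e, f) \<noteq> (h, g)" using P(3) indep_sym by blast+
    thus "lbef (Es s z) e f \<longleftrightarrow> lbef (Es s y) e f" using lbef_swap_adj P(1,2) by metis
  qed
  moreover have "set (Es s z) = set (Es s y)" using P by auto
  ultimately show ?case using step.IH gz fz by simp
qed

lemma bubble:
  "good s a \<Longrightarrow> distinct s \<Longrightarrow> Es s a = pre @ h # post \<Longrightarrow> (\<forall>g \<in> set pre. indep g h) \<Longrightarrow>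
   \<exists>a1. comm_step\<^sup>*\<^sup>* a a1 \<and> good s a1 \<and> fold swap_pos a1 s = fold swap_pos a s \<and>
        Es s a1 = h # pre @ post"
proof (induction pre arbitrary: post a rule: rev_induct)
  case Nil
  then show ?case by auto
next
  case (snoc g pre)
  have E: "Es s a = pre @ g # h # post" using snoc.prems(3) by simp
  obtain a2 where A: "comm_step a a2" "good s a2" "fold swap_pos a2 s = fold swap_pos a s"
    "Es s a2 = pre @ h # g # post"
    using swap1[OF snoc.prems(1,2) E] snoc.prems(4) by auto
  obtain a1 where B: "comm_step\<^sup>*\<^sup>* a2 a1" "good s a1" "fold swap_pos a1 s = fold swap_pos a2 s"
    "Es s a1 = h # pre @ g # post"
    using snoc.IH[OF A(2) snoc.prems(2) A(4)] snoc.prems(4) by auto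
  show ?case
  proof (intro exI conjI)
    show "comm_step\<^sup>*\<^sup>* a a1" using A(1) B(1) by (rule converse_rtranclp_into_rtranclp)
    show "good s a1" by (rule B(2))
    show "fold swap_pos a1 s = fold swap_pos a s" using A(3) B(3) by simp
    show "Es s a1 = h # (pre @ [g]) @ post" using B(4) by simp
  qed
qed

lemma realize_aux:
  "length a = m \<Longrightarrow> good s a \<Longrightarrow> distinct s \<Longrightarrow> distinct ord \<Longrightarrow> set ord = set (Es s a) \<Longrightarrow>
   (\<forall>e f. \<not> indep e f \<longrightarrow> lbef ord e f \<longrightarrow> lbef (Es s a) e f) \<Longrightarrow>
   \<exists>a'. comm_step\<^sup>*\<^sup>* a a' \<and> good s a' \<and> fold swap_pos a' s = fold swap_pos a s \<and> Es s a' = ord"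
proof (induction m arbitrary: a s ord)
  case 0
  then show ?case by auto
next
  case (Suc m)
  have dE: "distinct (Es s a)" using Es_invs[OF Suc.prems(2,3)] by simp
  obtain h ord0 where o: "ord = h # ord0"
    using Suc.prems(1,5) by (cases ord; cases a) auto
  have hin: "h \<in> set (Es s a)" using Suc.prems(5) o by auto
  then obtain pre post where E: "Es s a = pre @ h # post" by (meson split_list)
  have ind: "\<forall>g \<in> set pre. indep g h"
  proof
    fix g assume g: "g \<in> set pre"
    show "indep g h"
    proof (rule ccontr)
      assume dep: "\<not> indep g h"
      have "g \<noteq> h" using dE E g by auto
      hence "g \<in> set ord0" using Suc.prems(5) E g o by auto
      hence "lbef ord h g" using o by simp
      hence "lbef (Es s a) h g" using Suc.prems(6) dep indep_sym by blast
      moreover have "lbef (Es s a) g h" using E g by (simp add: lbef_append)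
      ultimately show False using lbef_asym[OF dE] by blast
    qed
  qed
  obtain a1 where A: "comm_step\<^sup>*\<^sup>* a a1" "good s a1" "fold swap_pos a1 s = fold swap_pos a s"
    "Es s a1 = h # pre @ post"
    using bubble[OF Suc.prems(2,3) E ind] by blast
  have cp: "\<forall>e f. \<not> indep e f \<longrightarrow> (lbef (Es s a1) e f \<longleftrightarrow> lbef (Es s a) e f)"
    using comm_star_props[OF A(1) Suc.prems(2,3)] by simp
  obtain c1 a2 where a1: "a1 = c1 # a2" using A(4) by (cases a1) auto
  let ?s1 = "swap_pos c1 s"
  have g1: "1 \<le> c1" "c1 < length s" "s ! (c1 - 1) < s ! c1" "good ?s1 a2" using A(2) a1 by auto
  have d1: "distinct ?s1" using swap_set_distinct g1 Suc.prems(3) by simp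
  have E2: "Es ?s1 a2 = pre @ post" "h = (s ! c1, s ! (c1 - 1))" using A(4) a1 by auto
  have len2: "length a2 = m"
    using Suc.prems(1) A(4) E a1 Es_length[of s a] Es_length[of ?s1 a2] by simp
  have do0: "distinct ord0" "h \<notin> set ord0" using Suc.prems(4) o by auto
  have so0: "set ord0 = set (Es ?s1 a2)"
  proof -
    have "set ord = insert h (set (pre @ post))" using Suc.prems(5) E by auto
    moreover have "h \<notin> set (pre @ post)" using dE E by auto
    moreover have "set ord = insert h (set ord0)" using o by simp
    ultimately have "set ord0 = set (pre @ post)" using do0(2) insert_ident by metis
    thus ?thesis using E2 by simp
  qed
  have ag0: "\<forall>e f. \<not> indep e f \<longrightarrow> lbef ord0 e f \<longrightarrow> lbef (Es ?s1 a2) e f"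
  proof (intro allI impI)
    fix e f assume dep: "\<not> indep e f" and l: "lbef ord0 e f"
    have "e \<noteq> h" using l do0 lbef_set by fastforce
    have "lbef ord e f" using l o by simp
    hence "lbef (Es s a) e f" using Suc.prems(6) dep by blast
    hence "lbef (Es s a1) e f" using cp dep by blast
    thus "lbef (Es ?s1 a2) e f" using \<open>e \<noteq> h\<close> a1 E2(2) by auto
  qed
  obtain a3 where B: "comm_step\<^sup>*\<^sup>* a2 a3" "good ?s1 a3" "fold swap_pos a3 ?s1 = fold swap_pos a2 ?s1"
    "Es ?s1 a3 = ord0"
    using Suc.IH[OF len2 g1(4) d1 do0(1) so0 ag0] by blast
  show ?case
  proof (intro exI conjI)
    show "comm_step\<^sup>*\<^sup>* a (c1 # a3)" using A(1) comm_star_lift[OF B(1), of c1] a1 by simp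
    show "good s (c1 # a3)" using g1 B(2) by simp
    show "fold swap_pos (c1 # a3) s = fold swap_pos a s" using B(3) A(3) a1 by simp
    show "Es s (c1 # a3) = ord" using B(4) E2 o by simp
  qed
qed

lemma realize:
  "good s a \<Longrightarrow> distinct s \<Longrightarrow> distinct ord \<Longrightarrow> set ord = set (Es s a) \<Longrightarrow>
   (\<forall>e f. \<not> indep e f \<longrightarrow> lbef ord e f \<longrightarrow> lbef (Es s a) e f) \<Longrightarrow>
   \<exists>a'. comm_step\<^sup>*\<^sup>* a a' \<and> good s a' \<and> fold swap_pos a' s = fold swap_pos a s \<and> Es s a' = ord"
  using realize_aux by blast

lemma Es_inj: "good s a \<Longrightarrow> good s b \<Longrightarrow> distinct s \<Longrightarrow> Es s a = Es s b \<Longrightarrow> a = b"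
proof (induction a arbitrary: s b)
  case Nil
  then show ?case by (cases b) auto
next
  case (Cons c a0)
  obtain c' b0 where b: "b = c' # b0" using Cons.prems(4) by (cases b) auto
  have r: "1 \<le> c" "c < length s" "1 \<le> c'" "c' < length s" using Cons.prems(1,2) b by auto
  have "s ! c = s ! c'" using Cons.prems(4) b by simp
  hence cc: "c = c'" using dist_idx[OF Cons.prems(3)] r by blast
  have d': "distinct (swap_pos c s)" using swap_set_distinct r Cons.prems(3) by simp
  have "a0 = b0" using Cons.IH[OF _ _ d', of b0] Cons.prems b cc by simp
  thus ?case using b cc by simp
qed




definition P3 :: "nat \<Rightarrow> nat \<Rightarrow> nat \<Rightarrow> (nat \<times> nat) set" where
  "P3 x y z = {(y, x), (z, x), (z, y)}"

lemma dep_triple: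
  assumes "snd e < fst e" "snd f < fst f" "e \<noteq> f" "\<not> indep e f"
  shows "\<exists>x y z. x < y \<and> y < z \<and> e \<in> P3 x y z \<and> f \<in> P3 x y z"
proof -
  obtain p1 q1 p2 q2 where e: "e = (p1, q1)" and f: "f = (p2, q2)" by (cases e, cases f)
  have lt: "q1 < p1" "q2 < p2" using assms e f by auto
  have sh: "p1 = p2 \<or> q1 = q2 \<or> p1 = q2 \<or> q1 = p2" using assms(4) e f by (auto simp: indep_def)
  have ne: "(p1, q1) \<noteq> (p2, q2)" using assms(3) e f by simp
  show ?thesis
  proof (cases "p1 = p2")
    case True
    hence "q1 \<noteq> q2" using ne by simp
    thus ?thesis
    proof (cases "q1 < q2")
      case True
      thus ?thesis using \<open>p1 = p2\<close> lt e f by (intro exI[of _ q1] exI[of _ q2] exI[of _ p1]) (auto simp: P3_def)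
    next
      case False
      hence "q2 < q1" using \<open>q1 \<noteq> q2\<close> by simp
      thus ?thesis using \<open>p1 = p2\<close> lt e f by (intro exI[of _ q2] exI[of _ q1] exI[of _ p1]) (auto simp: P3_def)
    qed
  next
    case F1: False
    show ?thesis
    proof (cases "q1 = q2")
      case True
      thus ?thesis
      proof (cases "p1 < p2")
        case True
        thus ?thesis using \<open>q1 = q2\<close> lt e f by (intro exI[of _ q1] exI[of _ p1] exI[of _ p2]) (auto simp: P3_def)
      next
        case False
        hence "p2 < p1" using F1 by simp
        thus ?thesis using \<open>q1 = q2\<close> lt e f by (intro exI[of _ q1] exI[of _ p2] exI[of _ p1]) (auto simp: P3_def)
      qed
    next
      case F2: False
      show ?thesis
      proof (cases "p1 = q2")
        case True
        thus ?thesis using lt e f by (intro exI[of _ q1] exI[of _ p1] exI[of _ p2]) (auto simp: P3_def)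
      next
        case False
        hence "q1 = p2" using sh F1 F2 by simp
        thus ?thesis using lt e f by (intro exI[of _ q2] exI[of _ q1] exI[of _ p1]) (auto simp: P3_def)
      qed
    qed
  qed
qed

lemma invs_fst_snd: "e \<in> invs t \<Longrightarrow> snd e < fst e \<and> fst e \<in> set t \<and> snd e \<in> set t"
  by (auto simp: invs_def)

lemma invs_trans: "(y, x) \<in> invs t \<Longrightarrow> (z, y) \<in> invs t \<Longrightarrow> (z, x) \<in> invs t"
  by (auto simp: invs_def)

lemma ord_facts:
  assumes g: "good (id_perm n) a" and xyz: "x < y" "y < z" "y \<in> {1..n}"
  defines "E \<equiv> Es (id_perm n) a"
  defines "gg \<equiv> lbef E (z, y) (y, x)"
  shows "(y, x) \<in> set E \<Longrightarrow> (z, x) \<in> set E \<Longrightarrow> (z, y) \<in> set E \<Longrightarrow>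
      (lbef E (y, x) (z, x) \<longleftrightarrow> \<not> gg) \<and> (lbef E (z, x) (y, x) \<longleftrightarrow> gg) \<and>
      (lbef E (z, x) (z, y) \<longleftrightarrow> \<not> gg) \<and> (lbef E (z, y) (z, x) \<longleftrightarrow> gg) \<and>
      (lbef E (y, x) (z, y) \<longleftrightarrow> \<not> gg) \<and> (lbef E (z, y) (y, x) \<longleftrightarrow> gg)"
    and "(y, x) \<notin> set E \<Longrightarrow> (z, x) \<in> set E \<Longrightarrow> (z, y) \<in> set E \<Longrightarrow>
      lbef E (z, y) (z, x) \<and> \<not> lbef E (z, x) (z, y)"
    and "(y, x) \<in> set E \<Longrightarrow> (z, x) \<in> set E \<Longrightarrow> (z, y) \<notin> set E \<Longrightarrow>
      lbef E (y, x) (z, x) \<and> \<not> lbef E (z, x) (y, x)"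
proof -
  have dE: "distinct E" using good_Es_props(1)[OF g] unfolding E_def .
  note C3 = tri_shape[OF g xyz, folded E_def]
  note tot = lbef_total[of _ E]
  note asy = lbef_asym[OF dE]
  note tr = lbef_trans[OF dE]
  have ne: "(y, x) \<noteq> (z, x)" "(z, x) \<noteq> (z, y)" "(y, x) \<noteq> (z, y)" using xyz by auto
  show "(y, x) \<in> set E \<Longrightarrow> (z, x) \<in> set E \<Longrightarrow> (z, y) \<in> set E \<Longrightarrow>
      (lbef E (y, x) (z, x) \<longleftrightarrow> \<not> gg) \<and> (lbef E (z, x) (y, x) \<longleftrightarrow> gg) \<and>
      (lbef E (z, x) (z, y) \<longleftrightarrow> \<not> gg) \<and> (lbef E (z, y) (z, x) \<longleftrightarrow> gg) \<and>
      (lbef E (y, x) (z, y) \<longleftrightarrow> \<not> gg) \<and> (lbef E (z, y) (y, x) \<longleftrightarrow> gg)"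
  proof -
    assume m: "(y, x) \<in> set E" "(z, x) \<in> set E" "(z, y) \<in> set E"
    have c: "lbef E (y, x) (z, x) \<longleftrightarrow> \<not> lbef E (z, y) (z, x)" using C3 m by blast
    show ?thesis
    proof (cases "lbef E (y, x) (z, x)")
      case True
      hence a1: "lbef E (z, x) (z, y)" using c tot[OF m(2) m(3) ne(2)] by blast
      hence a2: "lbef E (y, x) (z, y)" using tr True by blast
      thus ?thesis unfolding gg_def using True a1 a2 asy by blast
    next
      case False
      hence a1: "lbef E (z, y) (z, x)" using c by blast
      have a0: "lbef E (z, x) (y, x)" using False tot[OF m(1) m(2) ne(1)] by blast
      hence a2: "lbef E (z, y) (y, x)" using tr a1 by blast
      thus ?thesis unfolding gg_def using False a0 a1 a2 asy by blast
    qed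
  qed
  show "(y, x) \<notin> set E \<Longrightarrow> (z, x) \<in> set E \<Longrightarrow> (z, y) \<in> set E \<Longrightarrow>
      lbef E (z, y) (z, x) \<and> \<not> lbef E (z, x) (z, y)"
  proof -
    assume m: "(y, x) \<notin> set E" "(z, x) \<in> set E" "(z, y) \<in> set E"
    have "\<not> lbef E (y, x) (z, x)" using m(1) lbef_set by metis
    hence l: "lbef E (z, y) (z, x)" using C3 m(2) by blast
    show ?thesis using l asy[OF l] by blast
  qed
  show "(y, x) \<in> set E \<Longrightarrow> (z, x) \<in> set E \<Longrightarrow> (z, y) \<notin> set E \<Longrightarrow>
      lbef E (y, x) (z, x) \<and> \<not> lbef E (z, x) (y, x)"
  proof -
    assume m: "(y, x) \<in> set E" "(z, x) \<in> set E" "(z, y) \<notin> set E"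
    have "\<not> lbef E (z, y) (z, x)" using m(3) lbef_set by metis
    hence l: "lbef E (y, x) (z, x)" using C3 m(2) by blast
    show ?thesis using l asy[OF l] by blast
  qed
qed




lemma TRI:
  assumes ga: "good (id_perm n) a" and gb: "good (id_perm n) b"
    and fab: "fold swap_pos a (id_perm n) = fold swap_pos b (id_perm n)"
    and xyz: "x < y" "y < z" "y \<in> {1..n}"
    and ef: "e \<in> P3 x y z" "f \<in> P3 x y z" "e \<in> set (Es (id_perm n) a)" "f \<in> set (Es (id_perm n) a)" "e \<noteq> f"
  defines "Ea \<equiv> Es (id_perm n) a" and "Eb \<equiv> Es (id_perm n) b"
  shows "lbef Ea e f \<longleftrightarrow> (if (y, x) \<in> set Ea \<and> (z, x) \<in> set Ea \<and> (z, y) \<in> set Ea \<and>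
      lbef Ea (z, y) (y, x) \<noteq> lbef Eb (z, y) (y, x) then lbef Eb f e else lbef Eb e f)"
proof -
  have sE: "set Ea = set Eb" using good_Es_props(2)[OF ga] good_Es_props(2)[OF gb] fab
    unfolding Ea_def Eb_def by simp
  have sEa: "set Ea = invs (fold swap_pos a (id_perm n))" using good_Es_props(2)[OF ga] unfolding Ea_def .
  note A = ord_facts[OF ga xyz, folded Ea_def]
  note B = ord_facts[OF gb xyz, folded Eb_def]
  have tr: "(y, x) \<in> set Ea \<Longrightarrow> (z, y) \<in> set Ea \<Longrightarrow> (z, x) \<in> set Ea" using sEa invs_trans by metis
  have ef': "e \<in> set Ea" "f \<in> set Ea" using ef unfolding Ea_def by auto
  have ne: "(y, x) \<noteq> (z, x)" "(z, x) \<noteq> (z, y)" "(y, x) \<noteq> (z, y)" using xyz by auto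
  have P: "e \<in> {(y, x), (z, x), (z, y)}" "f \<in> {(y, x), (z, x), (z, y)}" using ef by (auto simp: P3_def)
  show ?thesis
  proof (cases "(y, x) \<in> set Ea \<and> (z, x) \<in> set Ea \<and> (z, y) \<in> set Ea")
    case True
    note a1 = A(1)[OF True[THEN conjunct1] True[THEN conjunct2, THEN conjunct1] True[THEN conjunct2, THEN conjunct2]]
    have T2: "(y, x) \<in> set Eb" "(z, x) \<in> set Eb" "(z, y) \<in> set Eb" using True sE by auto
    note b1 = B(1)[OF T2]
    show ?thesis using a1 b1 P ef(5) True by auto
  next
    case False
    show ?thesis
    proof (cases "(y, x) \<in> set Ea")
      case True
      hence "(z, y) \<notin> set Ea" using False tr by blast
      hence "(z, x) \<in> set Ea" and e2: "e \<in> {(y, x), (z, x)}" "f \<in> {(y, x), (z, x)}"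
        using P ef' ef(5) True by auto
      note a3 = A(3)[OF True \<open>(z, x) \<in> set Ea\<close> \<open>(z, y) \<notin> set Ea\<close>]
      note b3 = B(3)[OF True[unfolded sE] \<open>(z, x) \<in> set Ea\<close>[unfolded sE] \<open>(z, y) \<notin> set Ea\<close>[unfolded sE]]
      show ?thesis using a3 b3 e2 ef(5) False by auto
    next
      case F2: False
      hence "(z, x) \<in> set Ea" "(z, y) \<in> set Ea" and e2: "e \<in> {(z, x), (z, y)}" "f \<in> {(z, x), (z, y)}"
        using P ef' ef(5) by auto
      note a2 = A(2)[OF F2 this(1,2)]
      note b2 = B(2)[OF F2[unfolded sE] \<open>(z, x) \<in> set Ea\<close>[unfolded sE] \<open>(z, y) \<in> set Ea\<close>[unfolded sE]]
      show ?thesis using a2 b2 e2 ef(5) False by auto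
    qed
  qed
qed

lemma state_fold: "state n a k = fold swap_pos (take k a) (id_perm n)"
  by (simp add: state_def act_def)

lemma P_idx_eq:
  assumes g: "good (id_perm n) a" and k: "k < length a" and Ek: "Es (id_perm n) a ! k = (p, q)"
  shows "P_idx n a p q = Suc k"
proof -
  define E where "E = Es (id_perm n) a"
  have dE: "distinct E" using good_Es_props(1)[OF g] unfolding E_def .
  have inv: "\<And>j. j < length a \<Longrightarrow> snd (E ! j) < fst (E ! j)"
    using good_Es_props(2)[OF g] invs_fst_snd unfolding E_def by (metis Es_length nth_mem)
  have st: "\<And>j. j < length a \<Longrightarrow>
     {state n a j ! (a ! j - 1), state n a j ! (a ! j)} = {snd (E ! j), fst (E ! j)}"
    using Es_nth unfolding E_def state_fold by (metis fst_conv snd_conv)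
  show ?thesis unfolding P_idx_def
  proof (rule the_equality)
    show "1 \<le> Suc k \<and> Suc k \<le> length a \<and>
      {state n a (Suc k - 1) ! (a ! (Suc k - 1) - 1), state n a (Suc k - 1) ! (a ! (Suc k - 1))} = {p, q}"
      using st[OF k] k Ek unfolding E_def by auto
  next
    fix j assume j: "1 \<le> j \<and> j \<le> length a \<and>
      {state n a (j - 1) ! (a ! (j - 1) - 1), state n a (j - 1) ! (a ! (j - 1))} = {p, q}"
    hence jl: "j - 1 < length a" by auto
    have s: "{snd (E ! (j - 1)), fst (E ! (j - 1))} = {p, q}" using st[OF jl] j by simp
    have "q < p" using inv[OF k] Ek unfolding E_def by simp
    hence "E ! (j - 1) = (p, q)" using s inv[OF jl]
      by (cases "E ! (j - 1)") (auto simp: doubleton_eq_iff)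
    hence "E ! (j - 1) = E ! k" using Ek unfolding E_def by simp
    hence "j - 1 = k" using dist_idx[OF dE] jl k unfolding E_def by simp
    thus "j = Suc k" using j by (cases j) auto
  qed
qed

lemma T_set_char:
  assumes "distinct w"
  shows "(x, y, z) \<in> T_set w \<longleftrightarrow> x < y \<and> y < z \<and> (y, x) \<in> invs w \<and> (z, y) \<in> invs w"
  by (auto simp: T_set_def invs_def)

lemma Gamma_eq:
  assumes a: "a \<in> reduced_words n w" and T: "(x, y, z) \<in> T_set w"
  shows "Gamma n a (x, y, z) = (if lbef (Es (id_perm n) a) (z, y) (y, x) then 1 else 0)"
proof -
  define E where "E = Es (id_perm n) a"
  have r: "good (id_perm n) a" "fold swap_pos a (id_perm n) = w" "distinct w" using reduced_good[OF a] by auto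
  have sE: "set E = invs w" using good_Es_props(2)[OF r(1)] r(2) unfolding E_def by simp
  have dE: "distinct E" using good_Es_props(1)[OF r(1)] unfolding E_def .
  have m: "(y, x) \<in> set E" "(z, y) \<in> set E" using T_set_char[OF r(3)] T sE by auto
  obtain k1 where k1: "k1 < length E" "E ! k1 = (y, x)" using m(1) by (auto simp: in_set_conv_nth)
  obtain k2 where k2: "k2 < length E" "E ! k2 = (z, y)" using m(2) by (auto simp: in_set_conv_nth)
  have p1: "P_idx n a y x = Suc k1" using P_idx_eq[OF r(1)] k1 unfolding E_def by simp
  have p2: "P_idx n a z y = Suc k2" using P_idx_eq[OF r(1)] k2 unfolding E_def by simp
  have "lbef E (z, y) (y, x) \<longleftrightarrow> k2 < k1" using lbef_idx[OF dE k2(1) k1(1)] k1 k2 by simp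
  thus ?thesis unfolding Gamma_def using p1 p2 unfolding E_def by simp
qed

lemma finite_T_set: "finite (T_set w)"
proof -
  have "T_set w \<subseteq> set w \<times> set w \<times> set w" by (auto simp: T_set_def)
  thus ?thesis by (rule finite_subset) auto
qed

lemma Gamma_01: "Gamma n a T \<le> 1"
  by (cases T) (auto simp: Gamma_def)

lemma t_count_card:
  "t_count n w a b = card {xyz \<in> T_set w. Gamma n a xyz \<noteq> Gamma n b xyz}"
proof -
  have "t_count n w a b = (\<Sum>xyz \<in> T_set w. if Gamma n a xyz \<noteq> Gamma n b xyz then 1 else 0)"
    unfolding t_count_def
  proof (rule sum.cong)
    fix T
    have "Gamma n a T \<le> 1" "Gamma n b T \<le> 1" by (rule Gamma_01)+
    thus "(Gamma n a T + Gamma n b T) mod 2 = (if Gamma n a T \<noteq> Gamma n b T then 1 else 0)"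
      by (cases "Gamma n a T"; cases "Gamma n b T") auto
  qed simp
  also have "\<dots> = card (T_set w \<inter> {xyz. Gamma n a xyz \<noteq> Gamma n b xyz})"
    using finite_T_set by (simp add: sum.If_cases)
  also have "T_set w \<inter> {xyz. Gamma n a xyz \<noteq> Gamma n b xyz} = {xyz \<in> T_set w. Gamma n a xyz \<noteq> Gamma n b xyz}"
    by blast
  finally show ?thesis .
qed




definition gm :: "(nat \<times> nat) list \<Rightarrow> nat \<times> nat \<times> nat \<Rightarrow> bool" where
  "gm E T = (case T of (x, y, z) \<Rightarrow> lbef E (z, y) (y, x))"

lemma lbef_rev: "lbef (rev K) e f \<longleftrightarrow> lbef K f e"
  by (induction K) (auto simp: lbef_append)

lemma lbef_block_rev:
  "\<not> (e \<in> set K \<and> f \<in> set K) \<Longrightarrow> lbef (L @ K @ U) e f \<longleftrightarrow> lbef (L @ rev K @ U) e f"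
  by (auto simp: lbef_append lbef_rev dest: lbef_set)

lemma lbef_in_block:
  "set K \<inter> set L = {} \<Longrightarrow> set K \<inter> set U = {} \<Longrightarrow> e \<in> set K \<Longrightarrow> f \<in> set K \<Longrightarrow>
   lbef (L @ K @ U) e f \<longleftrightarrow> lbef K e f"
  by (auto simp: lbef_append dest: lbef_set)

lemma red_facts:
  assumes "a \<in> reduced_words n w"
  shows "good (id_perm n) a" "fold swap_pos a (id_perm n) = w" "distinct w" "set w = {1..n}"
    "set (Es (id_perm n) a) = invs w" "distinct (Es (id_perm n) a)"
  using reduced_good[OF assms] good_Es_props[of n a] by auto

lemma D_eq:
  assumes "a \<in> reduced_words n w" "b \<in> reduced_words n w"
  shows "{T \<in> T_set w. Gamma n a T \<noteq> Gamma n b T} =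
    {T \<in> T_set w. gm (Es (id_perm n) a) T \<noteq> gm (Es (id_perm n) b) T}"
  using Gamma_eq[OF assms(1)] Gamma_eq[OF assms(2)] by (auto simp: gm_def split: if_splits)

lemma comm_gm:
  assumes "comm_step\<^sup>*\<^sup>* a a'" "good (id_perm n) a"
  shows "gm (Es (id_perm n) a') T = gm (Es (id_perm n) a) T"
proof -
  obtain x y z where T: "T = (x, y, z)" by (cases T)
  have "\<not> indep (z, y) (y, x)" by (auto simp: indep_def)
  thus ?thesis using comm_star_props[OF assms id_perm_props(1)] T by (simp add: gm_def)
qed

lemma AGREE:
  assumes a: "a \<in> reduced_words n w" and b: "b \<in> reduced_words n w"
    and ef: "e \<in> invs w" "f \<in> invs w" "e \<noteq> f" "\<not> indep e f"
  shows "\<exists>x y z. x < y \<and> y < z \<and> e \<in> P3 x y z \<and> f \<in> P3 x y z \<and>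
    (lbef (Es (id_perm n) a) e f \<longleftrightarrow>
      (if (x, y, z) \<in> T_set w \<and> gm (Es (id_perm n) a) (x, y, z) \<noteq> gm (Es (id_perm n) b) (x, y, z)
       then lbef (Es (id_perm n) b) f e else lbef (Es (id_perm n) b) e f))"
proof -
  note ra = red_facts[OF a] and rb = red_facts[OF b]
  obtain x y z where xyz: "x < y" "y < z" "e \<in> P3 x y z" "f \<in> P3 x y z"
  proof -
    have "snd e < fst e" "snd f < fst f" using ef invs_fst_snd by auto
    from dep_triple[OF this ef(3,4)] show ?thesis using that by blast
  qed
  have y: "y \<in> {1..n}"
  proof -
    have "(y, x) \<in> {e, f} \<or> (z, y) \<in> {e, f}" using xyz ef(3) by (auto simp: P3_def)
    moreover have "fst e \<in> set w" "fst f \<in> set w" "snd e \<in> set w" "snd f \<in> set w"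
      using invs_fst_snd ef(1,2) by auto
    ultimately have "y \<in> set w" by auto
    thus ?thesis using ra(4) by simp
  qed
  have ef': "e \<in> set (Es (id_perm n) a)" "f \<in> set (Es (id_perm n) a)" using ef ra(5) by auto
  have fab: "fold swap_pos a (id_perm n) = fold swap_pos b (id_perm n)" using ra(2) rb(2) by simp
  note tri = TRI[OF ra(1) rb(1) fab xyz(1,2) y xyz(3,4) ef' ef(3)]
  have Tc: "(x, y, z) \<in> T_set w \<longleftrightarrow>
      (y, x) \<in> set (Es (id_perm n) a) \<and> (z, x) \<in> set (Es (id_perm n) a) \<and> (z, y) \<in> set (Es (id_perm n) a)"
    using T_set_char[OF ra(3), of x y z] ra(5) xyz(1,2) invs_trans[of y x w z] by auto
  show ?thesis using tri Tc xyz by (intro exI[of _ x] exI[of _ y] exI[of _ z]) (simp add: gm_def)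
qed

lemma class_eq_iff:
  assumes a: "a \<in> reduced_words n w" and b: "b \<in> reduced_words n w"
  shows "comm_class a = comm_class b \<longleftrightarrow>
    (\<forall>T \<in> T_set w. gm (Es (id_perm n) a) T = gm (Es (id_perm n) b) T)"
proof
  note ra = red_facts[OF a] and rb = red_facts[OF b]
  assume "comm_class a = comm_class b"
  moreover have "b \<in> comm_class b" by (simp add: comm_class_def)
  ultimately have "b \<in> comm_class a" by simp
  hence "comm_step\<^sup>*\<^sup>* a b" by (simp add: comm_class_def)
  thus "\<forall>T \<in> T_set w. gm (Es (id_perm n) a) T = gm (Es (id_perm n) b) T"
    using comm_gm ra(1) by metis
next
  note ra = red_facts[OF a] and rb = red_facts[OF b]
  assume eq: "\<forall>T \<in> T_set w. gm (Es (id_perm n) a) T = gm (Es (id_perm n) b) T"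
  have ag: "\<forall>e f. \<not> indep e f \<longrightarrow> lbef (Es (id_perm n) b) e f \<longrightarrow> lbef (Es (id_perm n) a) e f"
  proof (intro allI impI)
    fix e f assume dep: "\<not> indep e f" and l: "lbef (Es (id_perm n) b) e f"
    have "e \<noteq> f" using l lbef_irrefl[OF rb(6)] by metis
    moreover have "e \<in> invs w" "f \<in> invs w" using lbef_set[OF l] rb(5) by auto
    ultimately obtain x y z where
      "lbef (Es (id_perm n) a) e f \<longleftrightarrow>
      (if (x, y, z) \<in> T_set w \<and> gm (Es (id_perm n) a) (x, y, z) \<noteq> gm (Es (id_perm n) b) (x, y, z)
       then lbef (Es (id_perm n) b) f e else lbef (Es (id_perm n) b) e f)"
      using AGREE[OF a b _ _ _ dep] by blast
    thus "lbef (Es (id_perm n) a) e f" using eq l by auto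
  qed
  obtain a' where A: "comm_step\<^sup>*\<^sup>* a a'" "good (id_perm n) a'" "Es (id_perm n) a' = Es (id_perm n) b"
    using realize[OF ra(1) id_perm_props(1) rb(6) _ ag] ra(5) rb(5) by auto
  have "a' = b" using Es_inj[OF A(2) rb(1) id_perm_props(1) A(3)] .
  hence ab: "comm_step\<^sup>*\<^sup>* a b" using A(1) by simp
  hence ba: "comm_step\<^sup>*\<^sup>* b a" by (rule comm_star_sym)
  show "comm_class a = comm_class b" unfolding comm_class_def
    using ab ba by (auto intro: rtranclp_trans)
qed




lemma set_blk1: "set (blk1 x y z) = P3 x y z"
  by (auto simp: blk1_def P3_def)

lemma distinct_blk1: "x < y \<Longrightarrow> y < z \<Longrightarrow> distinct (blk1 x y z)"
  by (auto simp: blk1_def)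

lemma block_triple:
  "x < y \<Longrightarrow> y < z \<Longrightarrow> x' < y' \<Longrightarrow> y' < z' \<Longrightarrow> (z', y') \<in> P3 x y z \<Longrightarrow> (y', x') \<in> P3 x y z \<Longrightarrow>
   (x', y', z') = (x, y, z)"
  by (auto simp: P3_def)

lemma lbef_flip: "distinct K \<Longrightarrow> e \<in> set K \<Longrightarrow> f \<in> set K \<Longrightarrow> e \<noteq> f \<Longrightarrow> lbef K e f \<noteq> lbef K f e"
proof -
  assume a: "distinct K" "e \<in> set K" "f \<in> set K" "e \<noteq> f"
  have "lbef K e f \<or> lbef K f e" using lbef_total[OF a(2,3,4)] .
  moreover have "lbef K e f \<Longrightarrow> \<not> lbef K f e" using lbef_asym[OF a(1)] .
  ultimately show ?thesis by blast
qed

lemma easy_dir: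
  assumes a: "a \<in> reduced_words n w" and b: "b \<in> reduced_words n w"
    and adj: "C_adj n w (comm_class a) (comm_class b)"
  shows "card {T \<in> T_set w. gm (Es (id_perm n) a) T \<noteq> gm (Es (id_perm n) b) T} = 1"
proof -
  note ra = red_facts[OF a] and rb = red_facts[OF b]
  obtain a' b' where ab': "comm_step\<^sup>*\<^sup>* a a'" "comm_step\<^sup>*\<^sup>* b b'" "braid_step a' b'"
    using adj unfolding C_adj_def comm_class_def by blast
  have pa: "good (id_perm n) a'" "fold swap_pos a' (id_perm n) = w"
    using comm_star_props[OF ab'(1) ra(1) id_perm_props(1)] ra(2) by auto
  have ga: "\<And>T. gm (Es (id_perm n) a') T = gm (Es (id_perm n) a) T" using comm_gm[OF ab'(1) ra(1)] .
  have gb: "\<And>T. gm (Es (id_perm n) b') T = gm (Es (id_perm n) b) T" using comm_gm[OF ab'(2) rb(1)] .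
  obtain pre post x y z where xyz: "x < y" "y < z" and
    EE: "(Es (id_perm n) a' = pre @ blk1 x y z @ post \<and> Es (id_perm n) b' = pre @ rev (blk1 x y z) @ post) \<or>
       (Es (id_perm n) a' = pre @ rev (blk1 x y z) @ post \<and> Es (id_perm n) b' = pre @ blk1 x y z @ post)"
    using braid_E[OF pa(1) id_perm_props(1) ab'(3)] by blast
  obtain K where K: "K = blk1 x y z \<or> K = rev (blk1 x y z)" "Es (id_perm n) a' = pre @ K @ post"
    "Es (id_perm n) b' = pre @ rev K @ post"
    using EE
  proof
    assume h: "Es (id_perm n) a' = pre @ blk1 x y z @ post \<and> Es (id_perm n) b' = pre @ rev (blk1 x y z) @ post"
    show thesis by (rule that[of "blk1 x y z"]) (use h in auto)
  next
    assume h: "Es (id_perm n) a' = pre @ rev (blk1 x y z) @ post \<and> Es (id_perm n) b' = pre @ blk1 x y z @ post"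
    show thesis by (rule that[of "rev (blk1 x y z)"]) (use h in auto)
  qed
  have sK: "set K = P3 x y z" using K(1) set_blk1 by auto
  have dK: "distinct K" using K(1) distinct_blk1 xyz by auto
  have dA: "distinct (pre @ K @ post)" using good_Es_props(1)[OF pa(1)] K(2) by simp
  have sA: "set (pre @ K @ post) = invs w" using good_Es_props(2)[OF pa(1)] K(2) pa(2) by simp
  have disj: "set K \<inter> set pre = {}" "set K \<inter> set post = {}" "set (rev K) \<inter> set pre = {}"
    "set (rev K) \<inter> set post = {}" using dA by auto
  have T0: "(x, y, z) \<in> T_set w"
    using T_set_char[OF ra(3)] xyz sA sK by (auto simp: P3_def)
  have D: "{T \<in> T_set w. gm (Es (id_perm n) a) T \<noteq> gm (Es (id_perm n) b) T} = {(x, y, z)}"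
  proof (intro equalityI subsetI)
    fix T assume T: "T \<in> {T \<in> T_set w. gm (Es (id_perm n) a) T \<noteq> gm (Es (id_perm n) b) T}"
    obtain x' y' z' where T': "T = (x', y', z')" by (cases T)
    have lt: "x' < y'" "y' < z'" using T T' T_set_char[OF ra(3)] by auto
    have ne: "lbef (pre @ K @ post) (z', y') (y', x') \<noteq> lbef (pre @ rev K @ post) (z', y') (y', x')"
      using T T' ga gb K(2,3) by (auto simp: gm_def)
    hence "(z', y') \<in> set K \<and> (y', x') \<in> set K" using lbef_block_rev[where e="(z', y')" and f="(y', x')" and K=K and L=pre and U=post] by blast
    thus "T \<in> {(x, y, z)}" using block_triple[OF xyz lt] sK T' by auto
  next
    fix T assume "T \<in> {(x, y, z)}"
    hence T: "T = (x, y, z)" by simp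
    have m: "(z, y) \<in> set K" "(y, x) \<in> set K" "(z, y) \<noteq> (y, x)" using sK xyz by (auto simp: P3_def)
    have "lbef (pre @ K @ post) (z, y) (y, x) = lbef K (z, y) (y, x)"
      using lbef_in_block[OF disj(1,2) m(1,2)] .
    moreover have "lbef (pre @ rev K @ post) (z, y) (y, x) = lbef K (y, x) (z, y)"
    proof -
      have m': "(z, y) \<in> set (rev K)" "(y, x) \<in> set (rev K)" using m by auto
      show ?thesis using lbef_in_block[OF disj(3,4) m'] lbef_rev by simp
    qed
    moreover have "lbef K (z, y) (y, x) \<noteq> lbef K (y, x) (z, y)" using lbef_flip[OF dK m] .
    ultimately have "gm (Es (id_perm n) a') T \<noteq> gm (Es (id_perm n) b') T"
      using K(2,3) T by (simp add: gm_def)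
    thus "T \<in> {T \<in> T_set w. gm (Es (id_perm n) a) T \<noteq> gm (Es (id_perm n) b) T}"
      using ga gb T T0 by simp
  qed
  show ?thesis using D by simp
qed

lemma walk0: "C_walk n w A B 0 \<longleftrightarrow> A = B \<and> A \<in> C_vertices n w"
proof
  assume "C_walk n w A B 0"
  then obtain ps where "length ps = 1" "ps ! 0 = A" "ps ! 0 = B" "set ps \<subseteq> C_vertices n w"
    unfolding C_walk_def by auto
  thus "A = B \<and> A \<in> C_vertices n w" by (cases ps) auto
next
  assume "A = B \<and> A \<in> C_vertices n w"
  thus "C_walk n w A B 0" unfolding C_walk_def by (intro exI[of _ "[A]"]) auto
qed

lemma walk1: "C_walk n w A B 1 \<longleftrightarrow> C_adj n w A B"
proof
  assume "C_walk n w A B 1"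
  then obtain ps where p: "ps ! 0 = A" "ps ! 1 = B" "\<forall>i<1. C_adj n w (ps ! i) (ps ! (i + 1))"
    unfolding C_walk_def by blast
  hence "C_adj n w (ps ! 0) (ps ! (0 + 1))" by blast
  thus "C_adj n w A B" using p by simp
next
  assume adj: "C_adj n w A B"
  hence "A \<in> C_vertices n w" "B \<in> C_vertices n w" by (auto simp: C_adj_def)
  thus "C_walk n w A B 1" unfolding C_walk_def using adj
    by (intro exI[of _ "[A, B]"]) (auto simp: less_Suc_eq)
qed

lemma C_dist_one:
  assumes "A \<in> C_vertices n w"
  shows "C_dist n w A B = 1 \<longleftrightarrow> C_adj n w A B"
proof
  assume adj: "C_adj n w A B"
  have ne: "A \<noteq> B" using adj by (auto simp: C_adj_def)
  have w1: "1 \<in> {k. C_walk n w A B k}" using walk1 adj by simp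
  have w0: "0 \<notin> {k. C_walk n w A B k}" using walk0 ne by simp
  have "(INF k \<in> {k. C_walk n w A B k}. enat k) \<le> enat 1" by (rule INF_lower[OF w1])
  hence le: "C_dist n w A B \<le> 1" unfolding C_dist_def by (simp add: one_enat_def)
  have ge: "1 \<le> C_dist n w A B" unfolding C_dist_def
  proof (rule INF_greatest)
    fix k assume "k \<in> {k. C_walk n w A B k}"
    hence "k \<noteq> 0" using w0 by (cases k) auto
    thus "1 \<le> enat k" by (simp add: one_enat_def)
  qed
  show "C_dist n w A B = 1" using le ge by simp
next
  assume d: "C_dist n w A B = 1"
  let ?S = "enat ` {k. C_walk n w A B k}"
  have d': "Inf ?S = 1" using d unfolding C_dist_def by simp
  have "?S \<noteq> {}" using d' by (auto simp: Inf_enat_def split: if_splits)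
  hence "(LEAST x. x \<in> ?S) = 1" using d' \<open>?S \<noteq> {}\<close> by (metis Inf_enat_def)
  moreover have "(LEAST x. x \<in> ?S) \<in> ?S"
  proof -
    obtain s0 where "s0 \<in> ?S" using \<open>?S \<noteq> {}\<close> by blast
    thus ?thesis by (rule LeastI)
  qed
  ultimately have "1 \<in> ?S" by simp
  hence "C_walk n w A B 1" by (auto simp: one_enat_def)
  thus "C_adj n w A B" using walk1 by simp
qed




lemma hard_dir:
  assumes a: "a \<in> reduced_words n w" and b: "b \<in> reduced_words n w"
    and D: "{T \<in> T_set w. gm (Es (id_perm n) a) T \<noteq> gm (Es (id_perm n) b) T} = {(x, y, z)}"
  shows "C_adj n w (comm_class a) (comm_class b)"
proof -
  note ra = red_facts[OF a] and rb = red_facts[OF b]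
  define Ea where "Ea = Es (id_perm n) a"
  define Eb where "Eb = Es (id_perm n) b"
  have dEa: "distinct Ea" and dEb: "distinct Eb" and sEa: "set Ea = invs w" and sEb: "set Eb = invs w"
    using ra rb unfolding Ea_def Eb_def by auto
  have T0: "(x, y, z) \<in> T_set w" and gd: "gm Ea (x, y, z) \<noteq> gm Eb (x, y, z)"
    using D unfolding Ea_def Eb_def by blast+
  have xyz: "x < y" "y < z" "(y, x) \<in> invs w" "(z, y) \<in> invs w"
    using T_set_char[OF ra(3)] T0 by auto
  have zx: "(z, x) \<in> invs w" using invs_trans xyz by blast
  have yn: "y \<in> {1..n}" using invs_fst_snd[OF xyz(3)] ra(4) by auto
  define P0 where "P0 = P3 x y z"
  have P0E: "P0 \<subseteq> set Ea" using xyz zx sEa unfolding P0_def P3_def by auto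
  define gA where "gA = lbef Ea (z, y) (y, x)"
  have gAB: "gA \<noteq> lbef Eb (z, y) (y, x)" using gd unfolding gA_def gm_def by simp
  have ncl: "comm_class a \<noteq> comm_class b"
    using class_eq_iff[OF a b] T0 gd unfolding Ea_def Eb_def by blast
  have AG1: "\<And>e f. \<not> indep e f \<Longrightarrow> \<not> (e \<in> P0 \<and> f \<in> P0) \<Longrightarrow> lbef Ea e f \<longleftrightarrow> lbef Eb e f"
  proof -
    fix e f assume dep: "\<not> indep e f" and nP: "\<not> (e \<in> P0 \<and> f \<in> P0)"
    show "lbef Ea e f \<longleftrightarrow> lbef Eb e f"
    proof (cases "e = f")
      case True
      thus ?thesis using lbef_irrefl[OF dEa] lbef_irrefl[OF dEb] by simp
    next
      case False
      show ?thesis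
      proof (cases "e \<in> invs w \<and> f \<in> invs w")
        case False
        have "\<not> lbef Ea e f" using False lbef_set[of Ea e f] sEa by auto
        moreover have "\<not> lbef Eb e f" using False lbef_set[of Eb e f] sEb by auto
        ultimately show ?thesis by simp
      next
        case True
        obtain x' y' z' where X: "e \<in> P3 x' y' z'" "f \<in> P3 x' y' z'"
          "lbef Ea e f \<longleftrightarrow> (if (x', y', z') \<in> T_set w \<and> gm Ea (x', y', z') \<noteq> gm Eb (x', y', z')
             then lbef Eb f e else lbef Eb e f)"
          using AGREE[OF a b True[THEN conjunct1] True[THEN conjunct2] \<open>e \<noteq> f\<close> dep]
          unfolding Ea_def Eb_def by blast
        have "\<not> ((x', y', z') \<in> T_set w \<and> gm Ea (x', y', z') \<noteq> gm Eb (x', y', z'))"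
        proof
          assume "(x', y', z') \<in> T_set w \<and> gm Ea (x', y', z') \<noteq> gm Eb (x', y', z')"
          hence "(x', y', z') = (x, y, z)" using D unfolding Ea_def Eb_def by blast
          thus False using X nP unfolding P0_def by simp
        qed
        thus ?thesis by (rule trans[OF X(3) if_not_P])
      qed
    qed
  qed
  have AG2: "\<And>e f. e \<in> P0 \<Longrightarrow> f \<in> P0 \<Longrightarrow> e \<noteq> f \<Longrightarrow> lbef Ea e f \<longleftrightarrow> lbef Eb f e"
  proof -
    fix e f assume ef: "e \<in> P0" "f \<in> P0" "e \<noteq> f"
    have ef': "e \<in> set (Es (id_perm n) a)" "f \<in> set (Es (id_perm n) a)" using ef P0E unfolding Ea_def by auto
    have fab: "fold swap_pos a (id_perm n) = fold swap_pos b (id_perm n)" using ra(2) rb(2) by simp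
    note tri = TRI[OF ra(1) rb(1) fab xyz(1,2) yn ef(1,2)[unfolded P0_def] ef' ef(3)]
    have c: "(y, x) \<in> set Ea \<and> (z, x) \<in> set Ea \<and> (z, y) \<in> set Ea \<and> lbef Ea (z, y) (y, x) \<noteq> lbef Eb (z, y) (y, x)"
      using xyz zx sEa gAB unfolding gA_def by simp
    show "lbef Ea e f \<longleftrightarrow> lbef Eb f e" using tri c unfolding Ea_def Eb_def by simp
  qed
  define K where "K = (if gA then rev (blk1 x y z) else blk1 x y z)"
  have sK: "set K = P0" unfolding K_def P0_def using set_blk1 by simp
  have dK: "distinct K" unfolding K_def using distinct_blk1[OF xyz(1,2)] by simp
  have Kc: "K = blk1 x y z \<or> K = rev (blk1 x y z)" unfolding K_def by simp
  have KA: "\<And>e f. e \<in> P0 \<Longrightarrow> f \<in> P0 \<Longrightarrow> lbef K e f \<longleftrightarrow> lbef Ea e f"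
  proof -
    fix e f assume ef: "e \<in> P0" "f \<in> P0"
    have m: "(y, x) \<in> set Ea" "(z, x) \<in> set Ea" "(z, y) \<in> set Ea" using xyz zx sEa by auto
    note of = ord_facts(1)[OF ra(1) xyz(1,2) yn, folded Ea_def, OF m, folded gA_def]
    have ne: "(y, x) \<noteq> (z, x)" "(z, x) \<noteq> (z, y)" "(y, x) \<noteq> (z, y)" using xyz by auto
    show "lbef K e f \<longleftrightarrow> lbef Ea e f"
      using ef of ne lbef_irrefl[OF dEa] unfolding P0_def P3_def K_def blk1_def gA_def
      by (cases "lbef Ea (z, y) (y, x)") auto
  qed
  define R where "R = (\<lambda>e f. \<not> indep e f \<and> lbef Ea e f)"
  define Q where "Q = (\<lambda>e f. R e f \<and> e \<notin> P0 \<and> f \<notin> P0)"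
  define U where "U = {g. g \<notin> P0 \<and> (\<exists>T \<in> P0. \<exists>g0. R T g0 \<and> g0 \<notin> P0 \<and> Q\<^sup>*\<^sup>* g0 g)}"
  define L where "L = filter (\<lambda>e. e \<notin> P0 \<and> e \<notin> U) Ea"
  define Ul where "Ul = filter (\<lambda>e. e \<in> U) Ea"
  define ord where "ord = L @ K @ Ul"
  have chain: "\<And>g0 g. Q\<^sup>*\<^sup>* g0 g \<Longrightarrow> g0 = g \<or> (lbef Ea g0 g \<and> lbef Eb g0 g)"
  proof -
    fix g0 g assume "Q\<^sup>*\<^sup>* g0 g"
    thus "g0 = g \<or> (lbef Ea g0 g \<and> lbef Eb g0 g)"
    proof (induction rule: rtranclp_induct)
      case base
      then show ?case by simp
    next
      case (step u v)
      have q: "lbef Ea u v" "\<not> indep u v" "u \<notin> P0" "v \<notin> P0" using step.hyps(2) unfolding Q_def R_def by auto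
      have qb: "lbef Eb u v" using AG1[OF q(2)] q by simp
      show ?case using step.IH q qb lbef_trans[OF dEa] lbef_trans[OF dEb] by blast
    qed
  qed
  have key: "\<And>e f. e \<in> P0 \<Longrightarrow> f \<in> U \<Longrightarrow> \<not> R f e"
  proof
    fix e f assume e: "e \<in> P0" and f: "f \<in> U" and Rfe: "R f e"
    obtain T g0 where T: "T \<in> P0" "R T g0" "g0 \<notin> P0" "Q\<^sup>*\<^sup>* g0 f" and fP: "f \<notin> P0"
      using f unfolding U_def by blast
    have Tg: "lbef Ea T g0" "lbef Eb T g0" using T(2) AG1[of T g0] T(3) unfolding R_def by auto
    have fe: "lbef Ea f e" "lbef Eb f e" using Rfe AG1[of f e] fP unfolding R_def by auto
    have gf: "g0 = f \<or> (lbef Ea g0 f \<and> lbef Eb g0 f)" using chain[OF T(4)] .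
    have Tf: "lbef Ea T f" "lbef Eb T f" using gf Tg lbef_trans[OF dEa] lbef_trans[OF dEb] by blast+
    have Te: "lbef Ea T e" "lbef Eb T e" using Tf fe lbef_trans[OF dEa] lbef_trans[OF dEb] by blast+
    have "T \<noteq> e" using Te(1) lbef_irrefl[OF dEa] by metis
    hence "lbef Eb e T" using AG2[OF T(1) e] Te(1) by simp
    thus False using Te(2) lbef_asym[OF dEb] by blast
  qed
  have UP: "\<And>g. g \<in> U \<Longrightarrow> g \<notin> P0" unfolding U_def by blast
  have dord: "distinct ord" unfolding ord_def L_def Ul_def using dEa dK sK UP by auto
  have sord: "set ord = set Ea" unfolding ord_def L_def Ul_def using sK P0E by auto
  have agr: "\<forall>e f. \<not> indep e f \<longrightarrow> lbef ord e f \<longrightarrow> lbef Ea e f"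
  proof (intro allI impI)
    fix e f assume dep: "\<not> indep e f" and l: "lbef ord e f"
    have ef: "e \<in> set Ea" "f \<in> set Ea" using lbef_set[OF l] sord by auto
    have "e \<noteq> f" using l lbef_irrefl[OF dord] by metis
    show "lbef Ea e f"
    proof (rule ccontr)
      assume nl: "\<not> lbef Ea e f"
      hence "lbef Ea f e" using lbef_total[OF ef(2,1)] \<open>e \<noteq> f\<close> by auto
      hence Rfe: "R f e" unfolding R_def using dep indep_sym by blast
      have l': "lbef L e f \<or> lbef K e f \<or> lbef Ul e f \<or> (e \<in> set L \<and> f \<in> set K) \<or>
          (e \<in> set L \<and> f \<in> set Ul) \<or> (e \<in> set K \<and> f \<in> set Ul)"
        using l unfolding ord_def by (auto simp: lbef_append)
      show False
      proof -
        have c1: "\<not> lbef L e f" using nl unfolding L_def by (simp add: lbef_filter)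
        have c2: "\<not> lbef Ul e f" using nl unfolding Ul_def by (simp add: lbef_filter)
        have c3: "\<not> lbef K e f"
        proof
          assume "lbef K e f"
          hence "e \<in> P0" "f \<in> P0" using lbef_set[of K e f] sK by auto
          thus False using KA \<open>lbef K e f\<close> nl by blast
        qed
        have c4: "\<not> (e \<in> set L \<and> f \<in> set K)"
        proof
          assume h: "e \<in> set L \<and> f \<in> set K"
          hence "e \<notin> P0" "e \<notin> U" "f \<in> P0" using sK unfolding L_def by auto
          moreover have "e \<in> U" unfolding U_def using Rfe \<open>e \<notin> P0\<close> \<open>f \<in> P0\<close> by blast
          ultimately show False by blast
        qed
        have c5: "\<not> (e \<in> set L \<and> f \<in> set Ul)"
        proof
          assume h: "e \<in> set L \<and> f \<in> set Ul"
          hence eh: "e \<notin> P0" "e \<notin> U" "f \<in> U" unfolding L_def Ul_def by auto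
          then obtain T g0 where T: "T \<in> P0" "R T g0" "g0 \<notin> P0" "Q\<^sup>*\<^sup>* g0 f" and fP: "f \<notin> P0"
            unfolding U_def by blast
          have "Q f e" unfolding Q_def using Rfe fP eh by simp
          hence "Q\<^sup>*\<^sup>* g0 e" using T(4) by (rule rtranclp.rtrancl_into_rtrancl[rotated])
          hence "e \<in> U" unfolding U_def using T eh by blast
          thus False using eh by simp
        qed
        have c6: "\<not> (e \<in> set K \<and> f \<in> set Ul)"
        proof
          assume "e \<in> set K \<and> f \<in> set Ul"
          hence "e \<in> P0" "f \<in> U" using sK unfolding Ul_def by auto
          thus False using key Rfe by blast
        qed
        show False using l' c1 c2 c3 c4 c5 c6 by blast
      qed
    qed
  qed
  have agr2: "\<And>e f. \<not> indep e f \<Longrightarrow> lbef ord e f \<longleftrightarrow> lbef Ea e f"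
  proof
    fix e f assume dep: "\<not> indep e f"
    show "lbef ord e f \<Longrightarrow> lbef Ea e f" using agr dep by blast
    assume l: "lbef Ea e f"
    have ef: "e \<in> set ord" "f \<in> set ord" using lbef_set[OF l] sord by auto
    have "e \<noteq> f" using l lbef_irrefl[OF dEa] by metis
    show "lbef ord e f"
    proof (rule ccontr)
      assume "\<not> lbef ord e f"
      hence "lbef ord f e" using lbef_total[OF ef(2,1)] \<open>e \<noteq> f\<close> by auto
      hence "lbef Ea f e" using agr dep indep_sym by blast
      thus False using l lbef_asym[OF dEa] by blast
    qed
  qed
  obtain a' where A: "comm_step\<^sup>*\<^sup>* a a'" "good (id_perm n) a'"
    "fold swap_pos a' (id_perm n) = fold swap_pos a (id_perm n)" "Es (id_perm n) a' = L @ K @ Ul"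
    using realize[OF ra(1) id_perm_props(1) dord _ agr[unfolded Ea_def]] sord
    unfolding Ea_def ord_def by auto
  obtain b2 where B: "braid_step a' b2" "good (id_perm n) b2"
    "fold swap_pos b2 (id_perm n) = fold swap_pos a' (id_perm n)" "Es (id_perm n) b2 = L @ rev K @ Ul"
    using braid_conv[OF A(2) id_perm_props(1) xyz(1,2) A(4) Kc] by blast
  have disj: "set K \<inter> set L = {}" "set K \<inter> set Ul = {}" "set (rev K) \<inter> set L = {}"
    "set (rev K) \<inter> set Ul = {}" using dord unfolding ord_def by auto
  have agb: "\<forall>e f. \<not> indep e f \<longrightarrow> lbef Eb e f \<longrightarrow> lbef (Es (id_perm n) b2) e f"
  proof (intro allI impI)
    fix e f assume dep: "\<not> indep e f" and l: "lbef Eb e f"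
    have "e \<noteq> f" using l lbef_irrefl[OF dEb] by metis
    show "lbef (Es (id_perm n) b2) e f"
    proof (cases "e \<in> P0 \<and> f \<in> P0")
      case True
      have m: "e \<in> set (rev K)" "f \<in> set (rev K)" using True sK by auto
      have "lbef (L @ rev K @ Ul) e f \<longleftrightarrow> lbef (rev K) e f" using lbef_in_block[OF disj(3,4) m] .
      also have "\<dots> \<longleftrightarrow> lbef K f e" by (rule lbef_rev)
      also have "\<dots> \<longleftrightarrow> lbef Ea f e" using KA True by blast
      also have "\<dots> \<longleftrightarrow> lbef Eb e f" using AG2 True \<open>e \<noteq> f\<close> by metis
      finally show ?thesis using l B(4) by simp
    next
      case False
      have "lbef (L @ rev K @ Ul) e f \<longleftrightarrow> lbef ord e f"
        using lbef_block_rev[where e=e and f=f and K=K and L=L and U=Ul] False sK unfolding ord_def by auto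
      also have "\<dots> \<longleftrightarrow> lbef Ea e f" using agr2 dep by blast
      also have "\<dots> \<longleftrightarrow> lbef Eb e f" using AG1 dep False by blast
      finally show ?thesis using l B(4) by simp
    qed
  qed
  have sb2: "set Eb = set (Es (id_perm n) b2)" using B(4) sEb sEa sord unfolding ord_def by auto
  obtain b3 where B3: "comm_step\<^sup>*\<^sup>* b2 b3" "good (id_perm n) b3" "Es (id_perm n) b3 = Eb"
    using realize[OF B(2) id_perm_props(1) dEb sb2 agb] by blast
  have "b3 = b" using Es_inj[OF B3(2) rb(1) id_perm_props(1)] B3(3) unfolding Eb_def by blast
  hence "comm_step\<^sup>*\<^sup>* b b2" using B3(1) comm_star_sym by blast
  hence b2c: "b2 \<in> comm_class b" by (simp add: comm_class_def)
  have a'c: "a' \<in> comm_class a" using A(1) by (simp add: comm_class_def)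
  have va: "comm_class a \<in> C_vertices n w" "comm_class b \<in> C_vertices n w"
    using a b unfolding C_vertices_def by auto
  show ?thesis unfolding C_adj_def using va ncl a'c b2c B(1) by blast
qed


theorem mainTheorem4:
  fixes n :: nat and w a b :: "nat list"
  assumes "is_perm n w"
    and "a \<in> reduced_words n w" and "b \<in> reduced_words n w"
  shows "(C_dist n w (comm_class a) (comm_class b) = 1 \<longleftrightarrow> t_count n w a b = 1)
    \<and> (t_count n w a b = 1 \<longleftrightarrow>
         card {xyz \<in> T_set w. Gamma n a xyz \<noteq> Gamma n b xyz} = 1)"
proof -
  have a: "a \<in> reduced_words n w" and b: "b \<in> reduced_words n w" using assms by auto
  have tc: "t_count n w a b = card {xyz \<in> T_set w. Gamma n a xyz \<noteq> Gamma n b xyz}"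
    by (rule t_count_card)
  have DE: "{xyz \<in> T_set w. Gamma n a xyz \<noteq> Gamma n b xyz} =
     {T \<in> T_set w. gm (Es (id_perm n) a) T \<noteq> gm (Es (id_perm n) b) T}"
    by (rule D_eq[OF a b])
  have va: "comm_class a \<in> C_vertices n w" using a unfolding C_vertices_def by auto
  have "C_dist n w (comm_class a) (comm_class b) = 1 \<longleftrightarrow>
      card {T \<in> T_set w. gm (Es (id_perm n) a) T \<noteq> gm (Es (id_perm n) b) T} = 1"
  proof -
    have "C_dist n w (comm_class a) (comm_class b) = 1 \<longleftrightarrow> C_adj n w (comm_class a) (comm_class b)"
      by (rule C_dist_one[OF va])
    also have "\<dots> \<longleftrightarrow> card {T \<in> T_set w. gm (Es (id_perm n) a) T \<noteq> gm (Es (id_perm n) b) T} = 1"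
    proof
      assume "C_adj n w (comm_class a) (comm_class b)"
      thus "card {T \<in> T_set w. gm (Es (id_perm n) a) T \<noteq> gm (Es (id_perm n) b) T} = 1"
        by (rule easy_dir[OF a b])
    next
      assume "card {T \<in> T_set w. gm (Es (id_perm n) a) T \<noteq> gm (Es (id_perm n) b) T} = 1"
      then obtain T0 where "{T \<in> T_set w. gm (Es (id_perm n) a) T \<noteq> gm (Es (id_perm n) b) T} = {T0}"
        by (rule card_1_singletonE)
      moreover obtain x y z where "T0 = (x, y, z)" by (cases T0)
      ultimately show "C_adj n w (comm_class a) (comm_class b)" using hard_dir[OF a b] by blast
    qed
    finally show ?thesis .
  qed
  thus ?thesis using tc DE by simp
qed


end
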